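(* Let $(M,S)$ be a covered map where $M$ is bipartite, and let $(M,(I,O))=\Delta(M,S)$. The orientation $(I,O)$ is the geodesic orientation of $M$ if and only if $M_{|S}$ is the rightmost BFS tree of $M$.
   Context: Permutations compose right to left. A map is $M=(H,\sigma,\alpha)$, $H$ finite, $\alpha$ fixed-point-free involution, $\sigma$ permutation (its cycles give the counterclockwise order of half-edges around each vertex), $\langle\sigma,\alpha\rangle$ transitive, root $r\in H$; $\phi=\sigma\alpha$. $\pi_{|S}$ is obtained from the cycles of $\pi$ by erasing elements not in $S$. A covered map is $(M,S)$ with $S$ stable by $\alpha$ and $M_{|S}=(S,\sigma_{|S},\alpha_{|S})$ a connecting unicellular map ($\sigma_{|S},\alpha_{|S}$ transitive on $S$, $S$ meets every cycle of $\sigma$ — $S=\emptyset$ allowed if $\sigma$ has one cycle — and $\sigma_{|S}\alpha_{|S}$ cyclic). The motion function $\theta(h)=\sigma\alpha(h)$ ($h\in S$), $\sigma(h)$ ($h\notin S$) is cyclic and gives the order $r\prec_S\theta(r)\prec_S\cdots\prec_S\theta^{|H|-1}(r)$. $\Delta(M,S)=(M,(I,O))$ with $I=\{h\in S:\alpha(h)\prec_S h\}\cup\{h\notin S:h\prec_S\alpha(h)\}$, $O=H\setminus I$; an edge is oriented from the vertex of its half-edge in $O$ to the vertex of its half-edge in $I$. Let $d(v)$ be the graph distance from the root-vertex (vertex containing $r$). In a bipartite map adjacent vertices $u,v$ satisfy $|d(u)-d(v)|=1$; the geodesic orientation orients each edge from its endpoint with smaller $d$ to its endpoint with larger $d$ (so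 the ingoing half-edge is the one at the vertex with larger $d$). The rightmost BFS tree $T$ is built as follows: initially all vertices are alive and $T$ consists of the root-vertex only; repeatedly, take the alive vertex $v$ that has been in $T$ for the longest time, declare it dead, and inspect its half-edges in the counterclockwise order given by $\sigma$ — starting from $r$ if $v$ is the root-vertex, and otherwise starting from the half-edge following (under $\sigma$) the half-edge of $v$ on the tree edge joining $v$ to its parent — and whenever an inspected half-edge $h$ leads (via $\alpha(h)$) to a vertex not yet in $T$, add that vertex and the edge $\{h,\alpha(h)\}$ to $T$; stop when all vertices are dead. $M_{|S}$ being the rightmost BFS tree means $S$ is the set of half-edges of the edges of $T$. *)

theory Defs
  imports Main "HOL-Combinatorics.Permutations"
begin

definition cyclic_on :: "('a \<Rightarrow> 'a) \<Rightarrow> 'a set \<Rightarrow> bool" where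
  "cyclic_on \<pi> S \<longleftrightarrow> (\<forall>x\<in>S. \<forall>y\<in>S. \<exists>k. (\<pi>^^k) x = y)"

text \<open>The group generated by two permutations acts transitively on S
  (for permutations of a finite set, reachability by forward steps suffices).\<close>
definition transitive_on :: "('a \<Rightarrow> 'a) \<Rightarrow> ('a \<Rightarrow> 'a) \<Rightarrow> 'a set \<Rightarrow> bool" where
  "transitive_on \<sigma> \<alpha> S \<longleftrightarrow>
     (\<forall>x\<in>S. \<forall>y\<in>S. (x, y) \<in> ({(z, \<sigma> z) | z. z \<in> S} \<union> {(z, \<alpha> z) | z. z \<in> S})\<^sup>*)"

definition is_map :: "'a set \<Rightarrow> ('a \<Rightarrow> 'a) \<Rightarrow> ('a \<Rightarrow> 'a) \<Rightarrow> 'a \<Rightarrow> bool" where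
  "is_map H \<sigma> \<alpha> r \<longleftrightarrow> finite H \<and> \<sigma> permutes H \<and> \<alpha> permutes H \<and>
     (\<forall>h\<in>H. \<alpha> (\<alpha> h) = h \<and> \<alpha> h \<noteq> h) \<and> transitive_on \<sigma> \<alpha> H \<and> r \<in> H"

text \<open>Restriction pi|S: erase from the cycles of pi the elements not in S.\<close>
definition restr :: "('a \<Rightarrow> 'a) \<Rightarrow> 'a set \<Rightarrow> 'a \<Rightarrow> 'a" where
  "restr \<pi> S h = (\<pi> ^^ (LEAST k. 0 < k \<and> (\<pi>^^k) h \<in> S)) h"

text \<open>Covered map (M,S): S stable by alpha and M|S a connecting unicellular map.\<close>
definition covered_map :: "'a set \<Rightarrow> ('a \<Rightarrow> 'a) \<Rightarrow> ('a \<Rightarrow> 'a) \<Rightarrow> 'a \<Rightarrow> 'a set \<Rightarrow> bool" where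
  "covered_map H \<sigma> \<alpha> r S \<longleftrightarrow> is_map H \<sigma> \<alpha> r \<and> S \<subseteq> H \<and> \<alpha> ` S = S \<and>
     transitive_on (restr \<sigma> S) (restr \<alpha> S) S \<and>
     ((\<forall>h\<in>H. \<exists>k. (\<sigma>^^k) h \<in> S) \<or> (S = {} \<and> cyclic_on \<sigma> H)) \<and>
     cyclic_on (restr \<sigma> S \<circ> restr \<alpha> S) S"

definition motion :: "('a \<Rightarrow> 'a) \<Rightarrow> ('a \<Rightarrow> 'a) \<Rightarrow> 'a set \<Rightarrow> 'a \<Rightarrow> 'a" where
  "motion \<sigma> \<alpha> S h = (if h \<in> S then \<sigma> (\<alpha> h) else \<sigma> h)"

definition motion_pos :: "('a \<Rightarrow> 'a) \<Rightarrow> ('a \<Rightarrow> 'a) \<Rightarrow> 'a \<Rightarrow> 'a set \<Rightarrow> 'a \<Rightarrow> nat" where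
  "motion_pos \<sigma> \<alpha> r S h = (LEAST k. (motion \<sigma> \<alpha> S ^^ k) r = h)"

text \<open>The ingoing half-edges I of Delta(M,S); O is H minus I.\<close>
definition Delta_in :: "'a set \<Rightarrow> ('a \<Rightarrow> 'a) \<Rightarrow> ('a \<Rightarrow> 'a) \<Rightarrow> 'a \<Rightarrow> 'a set \<Rightarrow> 'a set" where
  "Delta_in H \<sigma> \<alpha> r S =
     {h \<in> S. motion_pos \<sigma> \<alpha> r S (\<alpha> h) < motion_pos \<sigma> \<alpha> r S h} \<union>
     {h \<in> H - S. motion_pos \<sigma> \<alpha> r S h < motion_pos \<sigma> \<alpha> r S (\<alpha> h)}"

definition vertex_of :: "('a \<Rightarrow> 'a) \<Rightarrow> 'a \<Rightarrow> 'a set" where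
  "vertex_of \<sigma> h = {(\<sigma>^^k) h | k. True}"

fun reach :: "('a \<Rightarrow> 'a) \<Rightarrow> ('a \<Rightarrow> 'a) \<Rightarrow> 'a \<Rightarrow> nat \<Rightarrow> 'a \<Rightarrow> bool" where
  "reach \<sigma> \<alpha> r 0 h \<longleftrightarrow> h \<in> vertex_of \<sigma> r"
| "reach \<sigma> \<alpha> r (Suc n) h \<longleftrightarrow> reach \<sigma> \<alpha> r n h \<or>
      (\<exists>h'. reach \<sigma> \<alpha> r n h' \<and> h \<in> vertex_of \<sigma> (\<alpha> h'))"

definition vdist :: "('a \<Rightarrow> 'a) \<Rightarrow> ('a \<Rightarrow> 'a) \<Rightarrow> 'a \<Rightarrow> 'a \<Rightarrow> nat" where
  "vdist \<sigma> \<alpha> r h = (LEAST n. reach \<sigma> \<alpha> r n h)"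

definition bipartite_map :: "'a set \<Rightarrow> ('a \<Rightarrow> 'a) \<Rightarrow> ('a \<Rightarrow> 'a) \<Rightarrow> bool" where
  "bipartite_map H \<sigma> \<alpha> \<longleftrightarrow> (\<exists>c :: 'a \<Rightarrow> bool.
      (\<forall>h\<in>H. c (\<sigma> h) = c h) \<and> (\<forall>h\<in>H. c (\<alpha> h) \<noteq> c h))"

definition geodesic_in :: "'a set \<Rightarrow> ('a \<Rightarrow> 'a) \<Rightarrow> ('a \<Rightarrow> 'a) \<Rightarrow> 'a \<Rightarrow> 'a set" where
  "geodesic_in H \<sigma> \<alpha> r = {h \<in> H. vdist \<sigma> \<alpha> r (\<alpha> h) < vdist \<sigma> \<alpha> r h}"

text \<open>BFS state: (vertices in T, half-edges of edges of T, FIFO queue of alive vertices).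
  Each alive vertex is stored in the queue by the half-edge at which its inspection
  starts (r for the root vertex, otherwise sigma of the half-edge of the vertex on
  its parent edge).\<close>
type_synonym 'a bfs_state = "'a set set \<times> 'a set \<times> 'a list"

definition inspect :: "('a \<Rightarrow> 'a) \<Rightarrow> ('a \<Rightarrow> 'a) \<Rightarrow> 'a bfs_state \<Rightarrow> 'a \<Rightarrow> 'a bfs_state" where
  "inspect \<sigma> \<alpha> st h = (case st of (V, E, Q) \<Rightarrow>
     if vertex_of \<sigma> (\<alpha> h) \<notin> V
     then (insert (vertex_of \<sigma> (\<alpha> h)) V, E \<union> {h, \<alpha> h}, Q @ [\<sigma> (\<alpha> h)])
     else (V, E, Q))"

definition ccw_list :: "('a \<Rightarrow> 'a) \<Rightarrow> 'a \<Rightarrow> 'a list" where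
  "ccw_list \<sigma> s = map (\<lambda>i. (\<sigma>^^i) s) [0..<card (vertex_of \<sigma> s)]"

definition bfs_step :: "('a \<Rightarrow> 'a) \<Rightarrow> ('a \<Rightarrow> 'a) \<Rightarrow> 'a bfs_state \<Rightarrow> 'a bfs_state" where
  "bfs_step \<sigma> \<alpha> st = (case st of
      (V, E, []) \<Rightarrow> (V, E, [])
    | (V, E, s # Q) \<Rightarrow> foldl (inspect \<sigma> \<alpha>) (V, E, Q) (ccw_list \<sigma> s))"

text \<open>Half-edges of the rightmost BFS tree (each vertex is processed once, and there are
  at most card H vertices, so card H steps exhaust the queue).\<close>
definition rightmost_bfs_tree :: "'a set \<Rightarrow> ('a \<Rightarrow> 'a) \<Rightarrow> ('a \<Rightarrow> 'a) \<Rightarrow> 'a \<Rightarrow> 'a set" where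
  "rightmost_bfs_tree H \<sigma> \<alpha> r =
     fst (snd ((bfs_step \<sigma> \<alpha> ^^ card H) ({vertex_of \<sigma> r}, {}, [r])))"

end

theory Submission
  imports Defs
begin


lemma perm_period_ex:
  assumes "f permutes A" "finite A"
  shows "\<exists>n>0. (f ^^ n) x = x"
proof -
  have "permutation f" using assms permutation_permutes by blast
  then obtain n where "n > 0" "(f ^^ n) x = x" by (rule permutation_self)
  then show ?thesis by blast
qed

definition per :: "('a \<Rightarrow> 'a) \<Rightarrow> 'a \<Rightarrow> nat" where
  "per f x = (LEAST n. 0 < n \<and> (f ^^ n) x = x)"

context
  fixes f :: "'a \<Rightarrow> 'a" and A :: "'a set"
  assumes fA: "f permutes A" and finA: "finite A"
begin

lemma per_pos: "0 < per f x" and per_id: "(f ^^ per f x) x = x"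
proof -
  obtain n where "0 < n \<and> (f ^^ n) x = x" using perm_period_ex[OF fA finA] by blast
  then have "0 < per f x \<and> (f ^^ per f x) x = x" unfolding per_def by (rule LeastI)
  then show "0 < per f x" "(f ^^ per f x) x = x" by auto
qed

lemma per_min: "0 < n \<Longrightarrow> n < per f x \<Longrightarrow> (f ^^ n) x \<noteq> x"
  unfolding per_def using not_less_Least by blast

lemma inj_f: "inj f" using fA permutes_inj by blast

lemma funpow_mod: "(f ^^ k) x = (f ^^ (k mod per f x)) x"
proof -
  have "(f ^^ (m * per f x)) x = x" for m
    by (induction m) (simp_all add: funpow_add per_id)
  then have "(f ^^ (k mod per f x + (k div per f x) * per f x)) x = (f ^^ (k mod per f x)) x"
    by (simp add: funpow_add)
  then show ?thesis by (metis mod_div_mult_eq)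
qed

lemma funpow_inj_per:
  assumes "i < per f x" "j < per f x" "(f ^^ i) x = (f ^^ j) x"
  shows "i = j"
proof (rule ccontr)
  assume "i \<noteq> j"
  { fix i j assume ij: "i < j" "j < per f x" "(f ^^ i) x = (f ^^ j) x"
    have "(f ^^ i) ((f ^^ (j - i)) x) = (f ^^ i) x"
      using ij by (metis funpow_add comp_apply le_add_diff_inverse less_imp_le)
    then have "(f ^^ (j - i)) x = x" using inj_fn[OF inj_f, of i] by (simp add: inj_eq)
    moreover have "0 < j - i" "j - i < per f x" using ij by auto
    ultimately have False using per_min by blast }
  then show False using assms \<open>i \<noteq> j\<close> by (metis linorder_neqE_nat)
qed

lemma vertex_of_per: "vertex_of f x = (\<lambda>i. (f ^^ i) x) ` {..<per f x}"
proof
  show "vertex_of f x \<subseteq> (\<lambda>i. (f ^^ i) x) ` {..<per f x}"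
  proof
    fix y assume "y \<in> vertex_of f x"
    then obtain k where "y = (f ^^ k) x" unfolding vertex_of_def by auto
    then have "y = (f ^^ (k mod per f x)) x" using funpow_mod by metis
    moreover have "k mod per f x < per f x" using per_pos by simp
    ultimately show "y \<in> (\<lambda>i. (f ^^ i) x) ` {..<per f x}" by blast
  qed
qed (auto simp: vertex_of_def)

lemma card_vertex_of: "card (vertex_of f x) = per f x"
proof -
  have "inj_on (\<lambda>i. (f ^^ i) x) {..<per f x}"
    by (rule inj_onI) (use funpow_inj_per in auto)
  then show ?thesis by (simp add: vertex_of_per card_image)
qed

lemma finite_vertex_of: "finite (vertex_of f x)"
  by (simp add: vertex_of_per)

lemma self_in_vertex_of: "x \<in> vertex_of f x"
  unfolding vertex_of_def by (auto intro: exI[of _ 0])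

lemma funpow_in_vertex_of: "(f ^^ k) x \<in> vertex_of f x"
  unfolding vertex_of_def by auto

lemma vertex_of_sub: "y \<in> vertex_of f x \<Longrightarrow> vertex_of f y \<subseteq> vertex_of f x"
  unfolding vertex_of_def by (auto, metis funpow_add comp_apply)

lemma vertex_of_eq: "y \<in> vertex_of f x \<Longrightarrow> vertex_of f y = vertex_of f x"
proof
  assume y: "y \<in> vertex_of f x"
  then show "vertex_of f y \<subseteq> vertex_of f x" by (rule vertex_of_sub)
  obtain k where k: "y = (f ^^ k) x" using y unfolding vertex_of_def by auto
  obtain m where m: "k mod per f x + m = per f x" 
    using per_pos by (metis less_imp_add_positive mod_less_divisor)
  have "(f ^^ m) y = (f ^^ (m + k mod per f x)) x" using k funpow_mod[of k x]
    by (simp add: funpow_add)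
  also have "\<dots> = x" using m per_id by (simp add: add.commute)
  finally have "x \<in> vertex_of f y" unfolding vertex_of_def by auto
  then show "vertex_of f x \<subseteq> vertex_of f y" by (rule vertex_of_sub)
qed

lemma vertex_of_f: "vertex_of f (f x) = vertex_of f x"
  by (rule vertex_of_eq) (metis funpow_in_vertex_of funpow.simps One_nat_def comp_apply id_apply)

lemma f_in_vertex_iff: "f y \<in> vertex_of f x \<longleftrightarrow> y \<in> vertex_of f x"
proof
  assume "f y \<in> vertex_of f x"
  then have "vertex_of f x = vertex_of f (f y)" using vertex_of_eq by auto
  then show "y \<in> vertex_of f x" using vertex_of_f self_in_vertex_of by auto
next
  assume "y \<in> vertex_of f x"
  then show "f y \<in> vertex_of f x" using vertex_of_eq vertex_of_f self_in_vertex_of by metis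
qed

lemma vertex_of_subset: "x \<in> A \<Longrightarrow> vertex_of f x \<subseteq> A"
  unfolding vertex_of_def using permutes_in_funpow_image[OF fA] by auto

lemma vertex_of_ex_index: "y \<in> vertex_of f x \<Longrightarrow> \<exists>i<per f x. y = (f ^^ i) x"
  using vertex_of_per by auto

lemma per_vertex: "y \<in> vertex_of f x \<Longrightarrow> per f y = per f x"
  using vertex_of_eq card_vertex_of by metis

end


lemma funpow_mod_gen: "(g ^^ q) x = x \<Longrightarrow> (g ^^ k) x = (g ^^ (k mod q)) x"
proof -
  assume q: "(g ^^ q) x = x"
  have m: "(g ^^ (m * q)) x = x" for m
    by (induction m) (simp_all add: funpow_add q)
  have "(g ^^ k) x = (g ^^ (k mod q)) ((g ^^ (k div q * q)) x)"
    by (metis funpow_add comp_apply mod_div_mult_eq)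
  then show ?thesis using m by simp
qed

lemma funpow_in: "g ` A \<subseteq> A \<Longrightarrow> a \<in> A \<Longrightarrow> (g ^^ i) a \<in> A"
  by (induction i) auto

lemma funpow_inj_on:
  assumes "inj_on g A" "g ` A \<subseteq> A" "a \<in> A" "b \<in> A" "(g ^^ i) a = (g ^^ i) b"
  shows "a = b"
  using assms(3-5)
proof (induction i arbitrary: a b)
  case 0 then show ?case by simp
next
  case (Suc i)
  have "(g ^^ i) a \<in> A" "(g ^^ i) b \<in> A"
    using funpow_in[OF assms(2)] Suc.prems by auto
  with Suc.prems assms(1) have "(g ^^ i) a = (g ^^ i) b" by (auto dest: inj_onD)
  then show ?case using Suc by blast
qed


locale bm =
  fixes H :: "'a set" and \<sigma> \<alpha> :: "'a \<Rightarrow> 'a" and r :: 'a and S :: "'a set"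
  assumes cov: "covered_map H \<sigma> \<alpha> r S" and bip: "bipartite_map H \<sigma> \<alpha>"
begin

lemma finH: "finite H" and sperm: "\<sigma> permutes H" and aperm: "\<alpha> permutes H"
  and ainv: "h \<in> H \<Longrightarrow> \<alpha> (\<alpha> h) = h" and afix: "h \<in> H \<Longrightarrow> \<alpha> h \<noteq> h"
  and trH: "transitive_on \<sigma> \<alpha> H" and rH: "r \<in> H" and SH: "S \<subseteq> H"
  and aSeq: "\<alpha> ` S = S"
  and connor: "(\<forall>h\<in>H. \<exists>k. (\<sigma>^^k) h \<in> S) \<or> (S = {} \<and> cyclic_on \<sigma> H)"
  and cycS: "cyclic_on (restr \<sigma> S \<circ> restr \<alpha> S) S"
  using cov unfolding covered_map_def is_map_def by auto

lemma aS: "x \<in> S \<Longrightarrow> \<alpha> x \<in> S" using aSeq by auto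
lemma aH: "x \<in> H \<Longrightarrow> \<alpha> x \<in> H" using aperm by (simp add: permutes_in_image)
lemma sH: "x \<in> H \<Longrightarrow> \<sigma> x \<in> H" using sperm by (simp add: permutes_in_image)
lemma sfunH: "x \<in> H \<Longrightarrow> (\<sigma>^^k) x \<in> H" using sperm by (simp add: permutes_in_funpow_image)

abbreviation vtx where "vtx h \<equiv> vertex_of \<sigma> h"
abbreviation deg where "deg h \<equiv> card (vtx h)"

lemmas vfacts = card_vertex_of[OF sperm finH] finite_vertex_of[OF sperm finH]
  self_in_vertex_of funpow_in_vertex_of vertex_of_eq[OF sperm finH] vertex_of_f[OF sperm finH]
  f_in_vertex_iff[OF sperm finH] vertex_of_subset[OF sperm finH]
  vertex_of_ex_index[OF sperm finH] per_vertex[OF sperm finH]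
  per_pos[OF sperm finH] per_id[OF sperm finH] funpow_inj_per[OF sperm finH]

lemma deg_pos: "0 < deg h" using card_vertex_of[OF sperm finH] per_pos[OF sperm finH] by simp
lemma vtxH: "h \<in> H \<Longrightarrow> g \<in> vtx h \<Longrightarrow> g \<in> H" using vertex_of_subset[OF sperm finH] by blast
lemma vtx_self: "h \<in> vtx h" by (rule self_in_vertex_of[OF sperm finH])
lemma vtx_fun: "(\<sigma>^^k) h \<in> vtx h" by (rule funpow_in_vertex_of[OF sperm finH])
lemma vtx_eq: "g \<in> vtx h \<Longrightarrow> vtx g = vtx h" by (rule vertex_of_eq[OF sperm finH])
lemma vtx_sym: "g \<in> vtx h \<Longrightarrow> h \<in> vtx g" using vtx_eq vtx_self by metis
lemma vtx_trans: "g \<in> vtx h \<Longrightarrow> x \<in> vtx g \<Longrightarrow> x \<in> vtx h" using vtx_eq by metis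
lemma vtx_s: "\<sigma> g \<in> vtx h \<longleftrightarrow> g \<in> vtx h" by (rule f_in_vertex_iff[OF sperm finH])
lemma vtx_s_self: "\<sigma> g \<in> vtx g" using vtx_s vtx_self by blast
lemma deg_id: "(\<sigma> ^^ deg h) h = h" using card_vertex_of[OF sperm finH] per_id[OF sperm finH] by simp
lemma deg_le: "h \<in> H \<Longrightarrow> deg h \<le> card H"
  using vertex_of_subset[OF sperm finH] finH by (meson card_mono)
lemma deg_inj: "i < deg h \<Longrightarrow> j < deg h \<Longrightarrow> (\<sigma>^^i) h = (\<sigma>^^j) h \<Longrightarrow> i = j"
  using card_vertex_of[OF sperm finH] funpow_inj_per[OF sperm finH] by simp
lemma vtx_idx: "g \<in> vtx h \<Longrightarrow> \<exists>i<deg h. g = (\<sigma>^^i) h"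
  using card_vertex_of[OF sperm finH] vertex_of_ex_index[OF sperm finH] by simp
lemma deg_vtx: "g \<in> vtx h \<Longrightarrow> deg g = deg h" using vtx_eq by simp
lemma finite_vtx: "finite (vtx h)" by (rule finite_vertex_of[OF sperm finH])

lemma conn: "h \<in> H \<Longrightarrow> \<exists>k. (\<sigma>^^k) h \<in> S"
proof -
  obtain c :: "'a \<Rightarrow> bool" where c1: "\<forall>h\<in>H. c (\<sigma> h) = c h" and c2: "\<forall>h\<in>H. c (\<alpha> h) \<noteq> c h"
    using bip unfolding bipartite_map_def by blast
  have cc: "c ((\<sigma>^^k) h) = c h" if "h \<in> H" for k h
    using that by (induction k) (auto simp: c1 sfunH)
  { assume "S = {}" "cyclic_on \<sigma> H"
    then obtain k where "(\<sigma>^^k) r = \<alpha> r" using rH aH unfolding cyclic_on_def by blast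
    then have False using cc[OF rH, of k] c2 rH by auto }
  then show "h \<in> H \<Longrightarrow> \<exists>k. (\<sigma>^^k) h \<in> S" using connor by blast
qed

abbreviation d where "d h \<equiv> vdist \<sigma> \<alpha> r h"
abbreviation reach' where "reach' n h \<equiv> reach \<sigma> \<alpha> r n h"

lemma reach_H: "reach' n h \<Longrightarrow> h \<in> H"
proof (induction n arbitrary: h)
  case 0 then show ?case using vtxH[OF rH] by simp
next
  case (Suc n)
  then show ?case using vtxH aH by (metis reach.simps(2))
qed

lemma reach_vtx: "reach' n h \<Longrightarrow> g \<in> vtx h \<Longrightarrow> reach' n g"
proof (induction n arbitrary: h g)
  case 0 then show ?case using vtx_trans by (metis reach.simps(1))
next
  case (Suc n)
  then show ?case using vtx_trans by (metis reach.simps(2))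
qed

lemma reach_mono: "reach' n h \<Longrightarrow> n \<le> m \<Longrightarrow> reach' m h"
  by (induction m) (auto simp: le_Suc_eq)

lemma reach_ex: assumes "h \<in> H" shows "\<exists>n. reach' n h"
proof -
  have "(r, h) \<in> ({(z, \<sigma> z) | z. z \<in> H} \<union> {(z, \<alpha> z) | z. z \<in> H})\<^sup>*"
    using trH rH assms unfolding transitive_on_def by blast
  then show ?thesis
  proof (induction rule: rtrancl_induct)
    case base then show ?case using vtx_self by (metis reach.simps(1))
  next
    case (step y z)
    then obtain n where n: "reach' n y" by blast
    from step(2) show ?case
    proof
      assume "(y, z) \<in> {(z, \<sigma> z) | z. z \<in> H}"
      then have "z = \<sigma> y" by auto
      then show ?thesis using n reach_vtx vtx_s_self by blast
    next
      assume "(y, z) \<in> {(z, \<alpha> z) | z. z \<in> H}"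
      then have "z = \<alpha> y" by auto
      then have "reach' (Suc n) z" using n vtx_self by auto
      then show ?thesis by blast
    qed
  qed
qed

lemma d_reach: "h \<in> H \<Longrightarrow> reach' (d h) h"
  unfolding vdist_def using reach_ex by (metis LeastI)

lemma d_le: "reach' n h \<Longrightarrow> d h \<le> n"
  unfolding vdist_def by (rule Least_le)

lemma d_vtx: "h \<in> H \<Longrightarrow> g \<in> vtx h \<Longrightarrow> d g = d h"
  by (meson antisym d_le d_reach reach_vtx vtx_sym vtxH)

lemma d_alpha: "h \<in> H \<Longrightarrow> d (\<alpha> h) \<le> Suc (d h)"
proof -
  assume "h \<in> H"
  then have "reach' (Suc (d h)) (\<alpha> h)" using d_reach vtx_self by auto
  then show ?thesis by (rule d_le)
qed

lemma d0: "h \<in> H \<Longrightarrow> d h = 0 \<longleftrightarrow> h \<in> vtx r"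
  using d_reach d_le by (metis le_zero_eq reach.simps(1))

lemma d_r: "d r = 0" using d0 rH vtx_self by blast

lemma d_Suc: assumes "h \<in> H" "d h = Suc n" shows "\<exists>g\<in>H. d g = n \<and> \<alpha> g \<in> vtx h"
proof -
  have "reach' (Suc n) h" using assms d_reach by metis
  moreover have "\<not> reach' n h" using assms d_le by fastforce
  ultimately obtain g where g: "reach' n g" "h \<in> vtx (\<alpha> g)" by auto
  have gH: "g \<in> H" using g reach_H by blast
  have "d g \<le> n" using g d_le by blast
  moreover have "d h = d (\<alpha> g)" using d_vtx g aH gH by (metis vtx_sym)
  then have "Suc n \<le> Suc (d g)" using d_alpha gH assms by metis
  ultimately show ?thesis using gH g vtx_sym by (intro bexI[of _ g]) auto
qed

lemma color: assumes "h \<in> H"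
  obtains c :: "'a \<Rightarrow> bool" where "\<forall>h\<in>H. c h = (if even (d h) then c r else \<not> c r)"
    "\<forall>h\<in>H. c (\<alpha> h) \<noteq> c h"
proof -
  obtain c :: "'a \<Rightarrow> bool" where c1: "\<forall>h\<in>H. c (\<sigma> h) = c h" and c2: "\<forall>h\<in>H. c (\<alpha> h) \<noteq> c h"
    using bip unfolding bipartite_map_def by blast
  have cc: "c ((\<sigma>^^k) h) = c h" if "h \<in> H" for k h
    using that by (induction k) (auto simp: c1 sfunH)
  have cv: "c g = c h" if "h \<in> H" "g \<in> vtx h" for g h
    using that cc unfolding vertex_of_def by auto
  have "\<forall>h\<in>H. d h = n \<longrightarrow> c h = (if even n then c r else \<not> c r)" for n
  proof (induction n)
    case 0 then show ?case using d0 cv rH by auto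
  next
    case (Suc n)
    show ?case
    proof (intro ballI impI)
      fix h assume h: "h \<in> H" "d h = Suc n"
      obtain g where g: "g \<in> H" "d g = n" "\<alpha> g \<in> vtx h" using d_Suc[OF h] by blast
      have "c h = c (\<alpha> g)" using cv[OF aH[OF g(1)]] g(3) vtx_sym by metis
      then show "c h = (if even (Suc n) then c r else \<not> c r)" using Suc g c2 by auto
    qed
  qed
  then show ?thesis using that c2 by blast
qed

lemma adj: assumes "h \<in> H" shows "d (\<alpha> h) = Suc (d h) \<or> d h = Suc (d (\<alpha> h))"
proof -
  obtain c :: "'a \<Rightarrow> bool" where c: "\<forall>h\<in>H. c h = (if even (d h) then c r else \<not> c r)"
    "\<forall>h\<in>H. c (\<alpha> h) \<noteq> c h" using color assms by blast
  have "d (\<alpha> h) \<noteq> d h" using c assms aH by (metis)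
  moreover have "d (\<alpha> h) \<le> Suc (d h)" "d h \<le> Suc (d (\<alpha> h))"
    using d_alpha assms aH ainv by metis+
  ultimately show ?thesis by linarith
qed

end


lemma funpow_pred: "0 < m \<Longrightarrow> (f^^m) x = (f^^(m-1)) (f x)"
  by (cases m) (simp_all add: funpow_Suc_right del: funpow.simps)

context bm begin

abbreviation th where "th \<equiv> motion \<sigma> \<alpha> S"
abbreviation pos where "pos \<equiv> motion_pos \<sigma> \<alpha> r S"
abbreviation N where "N \<equiv> card H"

lemma th_S: "h \<in> S \<Longrightarrow> th h = \<sigma> (\<alpha> h)" by (simp add: motion_def)
lemma th_nS: "h \<notin> S \<Longrightarrow> th h = \<sigma> h" by (simp add: motion_def)

lemma th_H: "h \<in> H \<Longrightarrow> th h \<in> H"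
  using SH by (auto simp: motion_def intro: sH aH)

lemma th_img: "th ` H \<subseteq> H" using th_H by blast

lemma th_inj: "inj_on th H"
proof (rule inj_onI)
  fix x y assume xy: "x \<in> H" "y \<in> H" "th x = th y"
  have si: "inj \<sigma>" using sperm permutes_inj by blast
  have ai: "inj \<alpha>" using aperm permutes_inj by blast
  show "x = y"
  proof (cases "x \<in> S"; cases "y \<in> S")
    assume "x \<in> S" "y \<in> S" then show ?thesis using xy si ai by (auto simp: motion_def inj_eq)
  next
    assume "x \<in> S" "y \<notin> S" then have "\<alpha> x = y" using xy si by (auto simp: motion_def inj_eq)
    then show ?thesis using aS \<open>x \<in> S\<close> \<open>y \<notin> S\<close> by blast
  next
    assume "x \<notin> S" "y \<in> S" then have "\<alpha> y = x" using xy si by (auto simp: motion_def inj_eq)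
    then show ?thesis using aS \<open>y \<in> S\<close> \<open>x \<notin> S\<close> by blast
  next
    assume "x \<notin> S" "y \<notin> S" then show ?thesis using xy si by (auto simp: motion_def inj_eq)
  qed
qed

lemma thrun: "(\<forall>j<m. (\<sigma>^^j) y \<notin> S) \<Longrightarrow> (th^^m) y = (\<sigma>^^m) y"
proof (induction m arbitrary: y)
  case 0 then show ?case by simp
next
  case (Suc m)
  have "y \<notin> S" using Suc.prems by (metis funpow_0 zero_less_Suc)
  then have "th y = \<sigma> y" by (rule th_nS)
  have "\<forall>j<m. (\<sigma>^^j) (\<sigma> y) \<notin> S" using Suc.prems by (metis Suc_mono funpow_Suc_right comp_apply)
  then have "(th^^m) (\<sigma> y) = (\<sigma>^^m) (\<sigma> y)" using Suc.IH by blast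
  then show ?case using \<open>th y = \<sigma> y\<close> by (simp add: funpow_Suc_right del: funpow.simps)
qed

lemma restr_alpha: "s \<in> S \<Longrightarrow> restr \<alpha> S s = \<alpha> s"
proof -
  assume s: "s \<in> S"
  have "(LEAST k. 0 < k \<and> (\<alpha>^^k) s \<in> S) = 1"
    by (rule Least_equality) (use s aS in auto)
  then show ?thesis by (simp add: restr_def)
qed

lemma restr_sigma_ex: "x \<in> H \<Longrightarrow> \<exists>k. 0 < k \<and> (\<sigma>^^k) x \<in> S"
proof -
  assume x: "x \<in> H"
  obtain k where k: "(\<sigma>^^k) x \<in> S" using conn x by blast
  have "(\<sigma>^^(k + deg x)) x = (\<sigma>^^k) x" using deg_id by (simp add: funpow_add)
  moreover have "0 < k + deg x" using deg_pos by simp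
  ultimately show ?thesis using k by metis
qed

lemma restr_sigma:
  assumes x: "x \<in> H"
  obtains m where "0 < m" "restr \<sigma> S x = (\<sigma>^^m) x" "(\<sigma>^^m) x \<in> S" "\<forall>j. 0 < j \<and> j < m \<longrightarrow> (\<sigma>^^j) x \<notin> S"
proof -
  let ?m = "LEAST k. 0 < k \<and> (\<sigma>^^k) x \<in> S"
  have m: "0 < ?m \<and> (\<sigma>^^?m) x \<in> S" using restr_sigma_ex[OF x] by (metis (mono_tags, lifting) LeastI)
  have nl: "\<forall>j. 0 < j \<and> j < ?m \<longrightarrow> (\<sigma>^^j) x \<notin> S" using not_less_Least by blast
  show ?thesis by (rule that[of ?m]) (use m nl in \<open>auto simp: restr_def\<close>)
qed

lemma phi_step:
  assumes s: "s \<in> S"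
  shows "\<exists>m. (th^^m) s = (restr \<sigma> S \<circ> restr \<alpha> S) s \<and> (restr \<sigma> S \<circ> restr \<alpha> S) s \<in> S"
proof -
  have as: "\<alpha> s \<in> H" using s aS SH by blast
  obtain m where m: "0 < m" "restr \<sigma> S (\<alpha> s) = (\<sigma>^^m) (\<alpha> s)" "(\<sigma>^^m) (\<alpha> s) \<in> S"
    "\<forall>j. 0 < j \<and> j < m \<longrightarrow> (\<sigma>^^j) (\<alpha> s) \<notin> S" using restr_sigma[OF as] by blast
  have "\<forall>j<m - 1. (\<sigma>^^j) (\<sigma> (\<alpha> s)) \<notin> S"
  proof (intro allI impI)
    fix j assume "j < m - 1"
    then have "0 < Suc j \<and> Suc j < m" by simp
    then have "(\<sigma>^^(Suc j)) (\<alpha> s) \<notin> S" using m(4) by blast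
    then show "(\<sigma>^^j) (\<sigma> (\<alpha> s)) \<notin> S" by (simp add: funpow_Suc_right del: funpow.simps)
  qed
  then have "(th^^(m-1)) (\<sigma> (\<alpha> s)) = (\<sigma>^^(m-1)) (\<sigma> (\<alpha> s))" by (rule thrun)
  moreover have "(th^^m) s = (th^^(m-1)) (th s)" using m(1) by (rule funpow_pred)
  moreover have "(\<sigma>^^m) (\<alpha> s) = (\<sigma>^^(m-1)) (\<sigma> (\<alpha> s))" using m(1) by (rule funpow_pred)
  ultimately have "(th^^m) s = restr \<sigma> S (\<alpha> s)" using m th_S[OF s] by simp
  then show ?thesis using m restr_alpha[OF s] by auto
qed

definition Orb where "Orb = {h. \<exists>k. (th^^k) r = h}"

lemma Orb_th: "h \<in> Orb \<Longrightarrow> (th^^m) h \<in> Orb"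
  unfolding Orb_def by (auto simp: funpow_add[symmetric] comp_def) (metis funpow_add comp_apply)

lemma Orb_S: "\<exists>s\<in>S. s \<in> Orb"
proof -
  obtain k where k: "(\<sigma>^^k) r \<in> S" using conn rH by blast
  let ?k = "LEAST k. (\<sigma>^^k) r \<in> S"
  have "(\<sigma>^^?k) r \<in> S" using k by (rule LeastI)
  moreover have "\<forall>j<?k. (\<sigma>^^j) r \<notin> S" using not_less_Least by blast
  then have "(th^^?k) r = (\<sigma>^^?k) r" by (rule thrun)
  ultimately show ?thesis unfolding Orb_def by (metis (mono_tags, lifting) mem_Collect_eq)
qed

lemma S_Orb: "S \<subseteq> Orb"
proof
  fix y assume y: "y \<in> S"
  obtain s where s: "s \<in> S" "s \<in> Orb" using Orb_S by blast
  let ?phi = "restr \<sigma> S \<circ> restr \<alpha> S"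
  have "(?phi^^k) s \<in> S \<and> (?phi^^k) s \<in> Orb" for k
  proof (induction k)
    case 0 then show ?case using s by simp
  next
    case (Suc k)
    then obtain m where "(th^^m) ((?phi^^k) s) = ?phi ((?phi^^k) s)" "?phi ((?phi^^k) s) \<in> S"
      using phi_step by blast
    then show ?case using Suc Orb_th by (metis funpow.simps(2) comp_apply)
  qed
  moreover obtain k where "(?phi^^k) s = y" using cycS s y unfolding cyclic_on_def by blast
  ultimately show "y \<in> Orb" by blast
qed

lemma H_Orb: "H \<subseteq> Orb"
proof
  fix h assume h: "h \<in> H"
  obtain k where k: "(\<sigma>^^k) h \<in> S" using conn h by blast
  let ?p = "deg h"
  have "(\<sigma>^^((?p - k mod ?p) + k)) h = h"
  proof -
    have "((?p - k mod ?p) + k) mod ?p = 0" using deg_pos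
      by (metis add.commute diff_add_inverse2 le_add_diff_inverse mod_add_right_eq mod_le_divisor mod_self)
    moreover have "(\<sigma>^^j) h = (\<sigma>^^(j mod ?p)) h" for j by (rule funpow_mod_gen) (rule deg_id)
    ultimately show ?thesis by (metis funpow_0)
  qed
  then have ex: "\<exists>m s. s \<in> S \<and> (\<sigma>^^m) s = h" using k by (metis funpow_add comp_apply)
  let ?m = "LEAST m. \<exists>s. s \<in> S \<and> (\<sigma>^^m) s = h"
  obtain s where s: "s \<in> S" "(\<sigma>^^?m) s = h" using LeastI_ex[OF ex] by blast
  show "h \<in> Orb"
  proof (cases "?m = 0")
    case True then show ?thesis using s S_Orb by auto
  next
    case False
    have nS: "\<forall>j<?m - 1. (\<sigma>^^j) (\<sigma> s) \<notin> S"
    proof (intro allI impI notI)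
      fix j assume j: "j < ?m - 1" "(\<sigma>^^j) (\<sigma> s) \<in> S"
      have e: "Suc ((?m - 1 - j) + j) = ?m" using j False by arith
      have "(\<sigma>^^(Suc ((?m - 1 - j) + j))) s = (\<sigma>^^(?m - 1 - j)) ((\<sigma>^^j) (\<sigma> s))"
        by (simp add: funpow_Suc_right funpow_add del: funpow.simps)
      then have "(\<sigma>^^(?m - 1 - j)) ((\<sigma>^^j) (\<sigma> s)) = h" using s e by simp
      then have "?m \<le> ?m - 1 - j" using j(2) by (metis (mono_tags, lifting) Least_le)
      then show False using False by linarith
    qed
    have as: "\<alpha> s \<in> S" using aS s by blast
    have "(th^^?m) (\<alpha> s) = (th^^(?m - 1)) (th (\<alpha> s))" using False
      by (intro funpow_pred) simp
    also have "th (\<alpha> s) = \<sigma> s" using th_S[OF as] ainv s SH by auto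
    also have "(th^^(?m - 1)) (\<sigma> s) = (\<sigma>^^(?m - 1)) (\<sigma> s)" using nS by (rule thrun)
    also have "\<dots> = h" using s False funpow_pred[of ?m \<sigma> s] by simp
    finally have e: "(th^^?m) (\<alpha> s) = h" .
    have "\<alpha> s \<in> Orb" using S_Orb as by blast
    then have "(th^^?m) (\<alpha> s) \<in> Orb" by (rule Orb_th)
    then show ?thesis unfolding e .
  qed
qed

lemma thH_fun: "h \<in> H \<Longrightarrow> (th^^k) h \<in> H" by (rule funpow_in[OF th_img])

lemma th_distinct: assumes "i < j" "j < N" shows "(th^^i) r \<noteq> (th^^j) r"
proof
  assume eq: "(th^^i) r = (th^^j) r"
  have "(th^^i) ((th^^(j-i)) r) = (th^^i) r" using eq assms
    by (metis funpow_add comp_apply le_add_diff_inverse less_imp_le)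
  then have q: "(th^^(j-i)) r = r"
    using funpow_inj_on[OF th_inj th_img] thH_fun rH by blast
  have "H \<subseteq> (\<lambda>k. (th^^k) r) ` {..<j-i}"
  proof
    fix h assume "h \<in> H"
    then obtain k where "(th^^k) r = h" using H_Orb Orb_def by blast
    then have "h = (th^^(k mod (j-i))) r" using funpow_mod_gen[OF q] by metis
    moreover have "k mod (j-i) < j - i" using assms by simp
    ultimately show "h \<in> (\<lambda>k. (th^^k) r) ` {..<j-i}" by blast
  qed
  then have "N \<le> j - i" by (metis card_image_le card_lessThan finite_lessThan le_trans card_mono finite_imageI)
  then show False using assms by linarith
qed

lemma th_img_all: "(\<lambda>k. (th^^k) r) ` {..<N} = H"
proof (rule card_subset_eq)
  show "finite H" by (rule finH)
  show "(\<lambda>k. (th^^k) r) ` {..<N} \<subseteq> H" using thH_fun rH by blast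
  have "inj_on (\<lambda>k. (th^^k) r) {..<N}"
    by (rule inj_onI) (metis lessThan_iff linorder_neqE_nat th_distinct)
  then show "card ((\<lambda>k. (th^^k) r) ` {..<N}) = N" by (simp add: card_image)
qed

lemma pos_def': "pos h = (LEAST k. (th^^k) r = h)" by (simp add: motion_pos_def)

lemma pos_spec: assumes "h \<in> H" shows "pos h < N" "(th^^(pos h)) r = h"
proof -
  obtain k where k: "k < N" "(th^^k) r = h" using th_img_all assms by force
  show "(th^^(pos h)) r = h" unfolding pos_def' using k by (metis (mono_tags, lifting) LeastI)
  show "pos h < N" unfolding pos_def' using k by (metis (mono_tags, lifting) Least_le le_less_trans)
qed

lemma pos_of: assumes "k < N" shows "pos ((th^^k) r) = k"
proof -
  have h: "(th^^k) r \<in> H" using thH_fun rH by blast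
  have "pos ((th^^k) r) \<le> k" unfolding pos_def' by (rule Least_le) simp
  moreover have "(th^^(pos ((th^^k) r))) r = (th^^k) r" using pos_spec[OF h] by blast
  ultimately show ?thesis using th_distinct assms by (metis le_neq_implies_less)
qed

lemma pos_inj: "g \<in> H \<Longrightarrow> h \<in> H \<Longrightarrow> pos g = pos h \<Longrightarrow> g = h"
  using pos_spec by metis

lemma pos_r: "pos r = 0" using pos_of[of 0] rH finH card_gt_0_iff by fastforce

lemma thN: "(th^^N) r = r"
proof -
  have "(th^^N) r \<in> H" using thH_fun rH by blast
  then have "(th^^N) r \<in> (\<lambda>k. (th^^k) r) ` {..<N}" using th_img_all by simp
  then obtain k where k: "k < N" "(th^^k) r = (th^^N) r" by auto
  show ?thesis
  proof (cases k)
    case 0 then show ?thesis using k by simp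
  next
    case (Suc k')
    have "N > 0" using k by simp
    have "(th^^N) r = th ((th^^(N - 1)) r)" using \<open>N > 0\<close>
      by (metis Suc_diff_1 funpow.simps(2) comp_apply)
    then have "th ((th^^k') r) = th ((th^^(N - 1)) r)" using k Suc by simp
    then have "(th^^k') r = (th^^(N-1)) r" using th_inj thH_fun rH by (meson inj_onD)
    moreover have "k' < N" "N - 1 < N" using k Suc by auto
    ultimately have "k' = N - 1" using th_distinct by (metis linorder_neqE_nat)
    then show ?thesis using k Suc by simp
  qed
qed

lemma pos_th: assumes "h \<in> H" "th h \<noteq> r" shows "pos (th h) = Suc (pos h)"
proof -
  have e: "(th^^(Suc (pos h))) r = th h" using pos_spec[OF assms(1)] by simp
  have "Suc (pos h) \<noteq> N" using e thN assms(2) by metis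
  then have "Suc (pos h) < N" using pos_spec[OF assms(1)] by linarith
  then show ?thesis using pos_of e by metis
qed

lemma pos_pred: assumes "h \<in> H" "h \<noteq> r" shows "\<exists>z\<in>H. th z = h \<and> Suc (pos z) = pos h"
proof -
  have "pos h \<noteq> 0" using pos_spec[OF assms(1)] assms(2) by (metis funpow_0)
  then obtain k where k: "pos h = Suc k" using not0_implies_Suc by blast
  let ?z = "(th^^k) r"
  have "th ?z = h" using pos_spec[OF assms(1)] k by simp
  moreover have "pos ?z = k" using pos_of pos_spec[OF assms(1)] k by simp
  ultimately show ?thesis by (intro bexI[of _ ?z]) (use k thH_fun[OF rH] in auto)
qed

lemma sigma_rule_nS: "y \<in> H \<Longrightarrow> y \<notin> S \<Longrightarrow> \<sigma> y \<noteq> r \<Longrightarrow> pos (\<sigma> y) = Suc (pos y)"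
  using pos_th th_nS by metis

lemma sigma_rule_S: "y \<in> S \<Longrightarrow> \<sigma> y \<noteq> r \<Longrightarrow> pos (\<sigma> y) = Suc (pos (\<alpha> y))"
proof -
  assume y: "y \<in> S" "\<sigma> y \<noteq> r"
  have "th (\<alpha> y) = \<sigma> y" using th_S[OF aS[OF y(1)]] ainv y SH by auto
  then show ?thesis using pos_th y aH SH by (metis subsetD)
qed

end


locale bm1 = bm +
  assumes H1: "\<And>x. x \<in> S \<Longrightarrow> pos x < pos (\<alpha> x) \<Longrightarrow> d (\<alpha> x) = Suc (d x)"
begin

definition down where "down x \<longleftrightarrow> x \<in> S \<and> pos (\<alpha> x) < pos x"
definition up where "up x \<longleftrightarrow> x \<in> S \<and> pos x < pos (\<alpha> x)"

lemma S_updown: "x \<in> S \<Longrightarrow> up x \<or> down x"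
proof -
  assume x: "x \<in> S"
  have "pos x \<noteq> pos (\<alpha> x)" using pos_inj afix x SH aH by (metis subsetD)
  then show ?thesis using x unfolding up_def down_def by linarith
qed

lemma down_S: "down x \<Longrightarrow> x \<in> S" by (simp add: down_def)
lemma up_S: "up x \<Longrightarrow> x \<in> S" by (simp add: up_def)
lemma down_H: "down x \<Longrightarrow> x \<in> H" using SH down_S by blast

lemma down_d: "down y \<Longrightarrow> d y = Suc (d (\<alpha> y))"
proof -
  assume y: "down y"
  then have "\<alpha> y \<in> S" "pos (\<alpha> y) < pos (\<alpha> (\<alpha> y))" using aS ainv SH unfolding down_def by auto
  then have "d (\<alpha> (\<alpha> y)) = Suc (d (\<alpha> y))" by (rule H1)
  then show ?thesis using ainv y down_H by simp
qed

lemma up_d: "up y \<Longrightarrow> d (\<alpha> y) = Suc (d y)" using H1 unfolding up_def by blast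

lemma up_down: "up y \<Longrightarrow> down (\<alpha> y)"
  unfolding up_def down_def using aS ainv SH by auto

lemma down_up: "down y \<Longrightarrow> up (\<alpha> y)"
  unfolding up_def down_def using aS ainv SH by auto

definition Lmax where "Lmax = Max (d ` H)"
lemma d_Lmax: "h \<in> H \<Longrightarrow> d h \<le> Lmax" unfolding Lmax_def using finH by simp

lemma neq_r: "h \<in> H \<Longrightarrow> 0 < d h \<Longrightarrow> h \<noteq> r" using d_r by auto

definition core :: "'a \<Rightarrow> 'a \<Rightarrow> bool" where
  "core h q \<longleftrightarrow> q \<in> vtx h \<and> down q \<and> (\<forall>y\<in>vtx h. down y \<longrightarrow> y = q) \<and>
    (\<forall>i j. i < j \<longrightarrow> j < deg h \<longrightarrow> pos ((\<sigma>^^i) (\<sigma> q)) < pos ((\<sigma>^^j) (\<sigma> q))) \<and>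
    (\<forall>x\<in>H. pos (\<alpha> q) < pos x \<and> pos x \<le> pos q \<longrightarrow> x \<in> vtx h \<or> d h < d x) \<and>
    pos (\<sigma> q) = Suc (pos (\<alpha> q))"

lemma core_ex: "h \<in> H \<Longrightarrow> 0 < d h \<Longrightarrow> \<exists>q. core h q"
proof (induction "Lmax - d h" arbitrary: h rule: less_induct)
  case less
  note hH = less.prems(1) and hpos = less.prems(2)
  define l where "l = d h"
  have IHup: "\<forall>x\<in>H. pos y < pos x \<and> pos x \<le> pos (\<alpha> y) \<longrightarrow> l < d x"
    if y: "y \<in> vtx h" "up y" for y
  proof -
    have yH: "y \<in> H" using y vtxH hH by blast
    have dy: "d y = l" using d_vtx[OF hH y(1)] l_def by simp
    have day: "d (\<alpha> y) = Suc l" using up_d[OF y(2)] dy by simp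
    have ayH: "\<alpha> y \<in> H" using aH yH by blast
    have "Lmax - d (\<alpha> y) < Lmax - d h" using d_Lmax[OF ayH] day l_def by linarith
    then have "\<exists>q'. core (\<alpha> y) q'" using less.hyps[of "\<alpha> y"] ayH day by simp
    then obtain q' where q': "core (\<alpha> y) q'" by blast
    have "down (\<alpha> y)" using up_down y(2) by blast
    then have "\<alpha> y = q'" using q' vtx_self unfolding core_def by blast
    then have ex: "\<forall>x\<in>H. pos y < pos x \<and> pos x \<le> pos (\<alpha> y) \<longrightarrow> x \<in> vtx (\<alpha> y) \<or> d (\<alpha> y) < d x"
      using q' ainv yH unfolding core_def by auto
    show ?thesis
    proof (intro ballI impI)
      fix x assume "x \<in> H" "pos y < pos x \<and> pos x \<le> pos (\<alpha> y)"
      then have "x \<in> vtx (\<alpha> y) \<or> d (\<alpha> y) < d x" using ex by blast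
      then show "l < d x" using d_vtx[OF ayH] day by fastforce
    qed
  qed
  obtain e where e: "e \<in> vtx h" "\<forall>y\<in>vtx h. pos e \<le> pos y"
    using ex_has_least_nat[of "\<lambda>y. y \<in> vtx h" h pos] vtx_self by blast
  have eH: "e \<in> H" using e vtxH hH by blast
  have de: "d e = l" using d_vtx[OF hH e(1)] l_def by simp
  have "e \<noteq> r" using neq_r eH de hpos l_def by simp
  then obtain z where z: "z \<in> H" "th z = e" "Suc (pos z) = pos e" using pos_pred eH by blast
  have znv: "z \<notin> vtx h" using z e by fastforce
  have zS: "z \<in> S"
  proof (rule ccontr)
    assume "z \<notin> S"
    then have "\<sigma> z = e" using z th_nS by simp
    then show False using znv e vtx_s by metis
  qed
  define q0 where "q0 = \<alpha> z"
  have q0S: "q0 \<in> S" using zS aS q0_def by blast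
  have q0H: "q0 \<in> H" using q0S SH by blast
  have sq0: "\<sigma> q0 = e" using z th_S[OF zS] q0_def by simp
  have q0v: "q0 \<in> vtx h" using sq0 e vtx_s by metis
  have aq0: "\<alpha> q0 = z" using q0_def ainv z by simp
  have dq0: "down q0" unfolding down_def using q0S aq0 z e q0v by fastforce
  define p where "p = deg h"
  define c where "c i = (\<sigma>^^i) e" for i
  have degs: "deg e = p" "deg q0 = p" using deg_vtx e q0v p_def by auto
  have pp: "0 < p" using deg_pos p_def by simp
  have cv: "c i \<in> vtx h" for i unfolding c_def by (rule vtx_trans[OF e(1) vtx_fun])
  have cH: "c i \<in> H" for i using vtxH[OF hH cv] .
  have cl: "c (p - 1) = q0"
  proof -
    have "c (p - 1) = (\<sigma>^^(p-1)) (\<sigma> q0)" using c_def sq0 by simp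
    also have "\<dots> = (\<sigma>^^p) q0" using funpow_pred[of p \<sigma> q0] pp by simp
    also have "\<dots> = q0" using deg_id degs by metis
    finally show ?thesis .
  qed
  have cSuc: "c (Suc i) = \<sigma> (c i)" for i unfolding c_def by simp
  have cnr: "\<sigma> (c i) \<noteq> r" for i
  proof -
    have "\<sigma> (c i) \<in> vtx h" using cv vtx_s by blast
    then have "d (\<sigma> (c i)) = l" using d_vtx hH l_def by simp
    then show ?thesis using d_r hpos l_def by auto
  qed
  have G: "i < p \<Longrightarrow> (\<forall>j<i. \<not> down (c j)) \<Longrightarrow> pos e \<le> pos (c i) \<and>
     (\<forall>x\<in>H. pos e \<le> pos x \<and> pos x \<le> pos (c i) \<longrightarrow> x \<in> vtx h \<or> l < d x) \<and>
     (\<forall>j<i. pos (c j) < pos (c i))" for i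
  proof (induction i)
    case 0
    have "c 0 = e" by (simp add: c_def)
    moreover have "x = e" if "x \<in> H" "pos e \<le> pos x" "pos x \<le> pos e" for x
      using pos_inj that eH by (metis le_antisym)
    ultimately show ?case using e by auto
  next
    case (Suc i)
    then have IH: "pos e \<le> pos (c i)"
      "\<forall>x\<in>H. pos e \<le> pos x \<and> pos x \<le> pos (c i) \<longrightarrow> x \<in> vtx h \<or> l < d x"
      "\<forall>j<i. pos (c j) < pos (c i)" by auto
    have nd: "\<not> down (c i)" using Suc.prems by blast
    have step: "pos (c i) < pos (c (Suc i)) \<and>
      (\<forall>x\<in>H. pos (c i) < pos x \<and> pos x \<le> pos (c (Suc i)) \<longrightarrow> x \<in> vtx h \<or> l < d x)"
    proof (cases "c i \<in> S")
      case False
      then have ps: "pos (c (Suc i)) = Suc (pos (c i))" using sigma_rule_nS cH cnr cSuc by metis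
      have "x = c (Suc i)" if "x \<in> H" "pos (c i) < pos x" "pos x \<le> pos (c (Suc i))" for x
        using that ps pos_inj cH by (metis le_antisym Suc_leI)
      then show ?thesis using ps cv by auto
    next
      case True
      then have u: "up (c i)" using nd S_updown by blast
      have ps: "pos (c (Suc i)) = Suc (pos (\<alpha> (c i)))" using sigma_rule_S True cnr cSuc by metis
      have lt: "pos (c i) < pos (\<alpha> (c i))" using u up_def by blast
      have "x \<in> vtx h \<or> l < d x" if "x \<in> H" "pos (c i) < pos x" "pos x \<le> pos (c (Suc i))" for x
      proof (cases "pos x \<le> pos (\<alpha> (c i))")
        case True then show ?thesis using IHup[OF cv u] that by blast
      next
        case False
        then have "pos x = pos (c (Suc i))" using that ps by linarith
        then have "x = c (Suc i)" using pos_inj that cH by metis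
        then show ?thesis using cv by blast
      qed
      then show ?thesis using ps lt by auto
    qed
    show ?case
    proof (intro conjI)
      show "pos e \<le> pos (c (Suc i))" using IH step by linarith
      show "\<forall>x\<in>H. pos e \<le> pos x \<and> pos x \<le> pos (c (Suc i)) \<longrightarrow> x \<in> vtx h \<or> l < d x"
      proof (intro ballI impI)
        fix x assume x: "x \<in> H" "pos e \<le> pos x \<and> pos x \<le> pos (c (Suc i))"
        show "x \<in> vtx h \<or> l < d x"
        proof (cases "pos x \<le> pos (c i)")
          case True then show ?thesis using IH x by blast
        next
          case False then show ?thesis using step x by auto
        qed
      qed
      show "\<forall>j<Suc i. pos (c j) < pos (c (Suc i))"
        using IH step by (metis less_Suc_eq order.strict_trans)
    qed
  qed
  have exm: "\<exists>m. m < p \<and> down (c m)" using cl dq0 pp by (metis diff_less zero_less_one)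
  define m where "m = (LEAST m. m < p \<and> down (c m))"
  have m: "m < p" "down (c m)" using LeastI_ex[OF exm] m_def by auto
  have mlt: "\<forall>j<m. \<not> down (c j)"
  proof (intro allI impI)
    fix j assume j: "j < m"
    then have "\<not> (j < p \<and> down (c j))" unfolding m_def by (rule not_less_Least)
    then show "\<not> down (c j)" using j m(1) by simp
  qed
  note Gm = G[OF m(1) mlt]
  have cmq: "c m = q0"
  proof (rule ccontr)
    assume ne: "c m \<noteq> q0"
    define y where "y = c m"
    have yd: "down y" using m y_def by simp
    have yS: "y \<in> S" using yd down_S by blast
    have dy: "d y = l" using d_vtx hH cv y_def l_def by simp
    have day: "d (\<alpha> y) < l" using down_d[OF yd] dy by simp
    have ayH: "\<alpha> y \<in> H" using aH cH y_def by simp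
    have "\<sigma> y \<in> vtx h" using cv vtx_s y_def by blast
    then have "pos e \<le> pos (\<sigma> y)" using e by blast
    moreover have "pos (\<sigma> y) = Suc (pos (\<alpha> y))" using sigma_rule_S yS cnr y_def by simp
    moreover have "pos (\<alpha> y) \<noteq> pos z"
    proof
      assume "pos (\<alpha> y) = pos z"
      then have "\<alpha> y = z" using pos_inj ayH z by blast
      then have "y = q0" using q0_def ainv cH y_def by metis
      then show False using ne y_def by simp
    qed
    ultimately have "pos e \<le> pos (\<alpha> y)" using z by linarith
    moreover have "pos (\<alpha> y) \<le> pos (c m)" using yd down_def y_def by simp
    ultimately have "\<alpha> y \<in> vtx h \<or> l < d (\<alpha> y)" using Gm ayH by blast
    then show False using day d_vtx hH l_def by fastforce
  qed
  have mp: "m = p - 1"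
    using cmq cl m(1) deg_inj[of m e "p - 1"] degs c_def pp by simp
  have allc: "\<exists>i<p. y = c i" if "y \<in> vtx h" for y
  proof -
    have "y \<in> vtx e" using that e vtx_eq by metis
    then show ?thesis using vtx_idx degs c_def by auto
  qed
  have sc: "(\<sigma>^^i) (\<sigma> q0) = c i" for i using sq0 c_def by simp
  have "core h q0"
    unfolding core_def
  proof (intro conjI)
    show "q0 \<in> vtx h" by (rule q0v)
    show "down q0" by (rule dq0)
    show "\<forall>y\<in>vtx h. down y \<longrightarrow> y = q0"
    proof (intro ballI impI)
      fix y assume y: "y \<in> vtx h" "down y"
      then obtain i where i: "i < p" "y = c i" using allc by blast
      have "\<not> i < m" using mlt y i by blast
      then have "i = m" using i mp by linarith
      then show "y = q0" using i cmq by simp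
    qed
    show "\<forall>i j. i < j \<longrightarrow> j < deg h \<longrightarrow> pos ((\<sigma>^^i) (\<sigma> q0)) < pos ((\<sigma>^^j) (\<sigma> q0))"
    proof (intro allI impI)
      fix i j assume ij: "i < j" "j < deg h"
      have "\<forall>j'<j. \<not> down (c j')" using mlt mp ij p_def by auto
      then show "pos ((\<sigma>^^i) (\<sigma> q0)) < pos ((\<sigma>^^j) (\<sigma> q0))" using G ij p_def sc by auto
    qed
    have Gl: "\<forall>x\<in>H. pos e \<le> pos x \<and> pos x \<le> pos (c (p-1)) \<longrightarrow> x \<in> vtx h \<or> l < d x"
      using Gm mp by blast
    show "\<forall>x\<in>H. pos (\<alpha> q0) < pos x \<and> pos x \<le> pos q0 \<longrightarrow> x \<in> vtx h \<or> d h < d x"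
      using Gl cl aq0 z l_def by auto
    show "pos (\<sigma> q0) = Suc (pos (\<alpha> q0))" using sq0 aq0 z by simp
  qed
  then show ?case by blast
qed

end


context bm1 begin

definition qv where "qv h = (SOME q. core h q)"

lemma qv_core: "h \<in> H \<Longrightarrow> 0 < d h \<Longrightarrow> core h (qv h)"
  unfolding qv_def using core_ex someI_ex by metis

lemma core_vtx: "h \<in> H \<Longrightarrow> g \<in> vtx h \<Longrightarrow> core g = core h"
proof -
  assume a: "h \<in> H" "g \<in> vtx h"
  have "vtx g = vtx h" "deg g = deg h" "d g = d h" using vtx_eq deg_vtx d_vtx a by auto
  then show ?thesis unfolding core_def by (intro ext) simp
qed

lemma qv_vtx: "h \<in> H \<Longrightarrow> g \<in> vtx h \<Longrightarrow> qv g = qv h"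
  unfolding qv_def using core_vtx by simp

lemma qv_props:
  assumes "h \<in> H" "0 < d h"
  shows "qv h \<in> vtx h" "down (qv h)" "\<And>y. y \<in> vtx h \<Longrightarrow> down y \<Longrightarrow> y = qv h"
    "\<And>i j. i < j \<Longrightarrow> j < deg h \<Longrightarrow> pos ((\<sigma>^^i) (\<sigma> (qv h))) < pos ((\<sigma>^^j) (\<sigma> (qv h)))"
    "\<And>x. x \<in> H \<Longrightarrow> pos (\<alpha> (qv h)) < pos x \<Longrightarrow> pos x \<le> pos (qv h) \<Longrightarrow> x \<in> vtx h \<or> d h < d x"
    "pos (\<sigma> (qv h)) = Suc (pos (\<alpha> (qv h)))"
  using qv_core[OF assms] unfolding core_def by blast+

lemma qv_H: "h \<in> H \<Longrightarrow> 0 < d h \<Longrightarrow> qv h \<in> H"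
  using qv_props(1) vtxH by blast

lemma qv_range: assumes h: "h \<in> H" "0 < d h" and y: "y \<in> vtx h"
  shows "pos (\<alpha> (qv h)) < pos y \<and> pos y \<le> pos (qv h)"
proof -
  let ?q = "qv h" and ?p = "deg h"
  have qv: "?q \<in> vtx h" using qv_props(1)[OF h] .
  have dq: "deg (\<sigma> ?q) = ?p" using deg_vtx qv vtx_s by metis
  have "y \<in> vtx (\<sigma> ?q)" using y qv vtx_s vtx_eq by metis
  then obtain i where i: "i < ?p" "y = (\<sigma>^^i) (\<sigma> ?q)" using vtx_idx dq by metis
  have pp: "0 < ?p" using deg_pos by simp
  have last: "(\<sigma>^^(?p - 1)) (\<sigma> ?q) = ?q"
    using funpow_pred[of ?p \<sigma> ?q] pp deg_id[of ?q] deg_vtx[OF qv] by simp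
  have mono: "pos ((\<sigma>^^i) (\<sigma> ?q)) \<le> pos ((\<sigma>^^j) (\<sigma> ?q))" if "i \<le> j" "j < ?p" for i j
    using qv_props(4)[OF h, of i j] that by (cases "i = j") auto
  have "pos (\<sigma> ?q) \<le> pos y" using mono[of 0 i] i by simp
  moreover have "pos y \<le> pos ?q" using mono[of i "?p - 1"] i last by simp
  ultimately show ?thesis using qv_props(6)[OF h] by simp
qed

lemma root_mono: assumes "i < j" "j < deg r" shows "pos ((\<sigma>^^i) r) < pos ((\<sigma>^^j) r)"
proof -
  have step: "pos y < pos (\<sigma> y)" if y: "y \<in> vtx r" "\<sigma> y \<noteq> r" for y
  proof -
    have yH: "y \<in> H" using y vtxH rH by blast
    show ?thesis
    proof (cases "y \<in> S")
      case False then show ?thesis using sigma_rule_nS yH y by simp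
    next
      case True
      have "\<not> down y"
      proof
        assume "down y"
        then have "0 < d y" using down_d by simp
        moreover have "d y = 0" using d_vtx rH y d_r by simp
        ultimately show False by simp
      qed
      then have "up y" using S_updown True by blast
      then show ?thesis using sigma_rule_S True y up_def by simp
    qed
  qed
  have "\<forall>i<j. pos ((\<sigma>^^i) r) < pos ((\<sigma>^^j) r)" if "j < deg r" for j
    using that
  proof (induction j)
    case 0 then show ?case by simp
  next
    case (Suc j)
    have ne: "\<sigma> ((\<sigma>^^j) r) \<noteq> r"
    proof
      assume "\<sigma> ((\<sigma>^^j) r) = r"
      then have "(\<sigma>^^(Suc j)) r = (\<sigma>^^0) r" by simp
      then show False using deg_inj Suc.prems by (metis Zero_not_Suc deg_pos)
    qed
    have "pos ((\<sigma>^^j) r) < pos ((\<sigma>^^(Suc j)) r)" using step[OF vtx_fun ne] by simp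
    then show ?case using Suc by (metis less_Suc_eq order.strict_trans Suc_lessD)
  qed
  then show ?thesis using assms by blast
qed

lemma separation:
  assumes h: "h \<in> H" "0 < d h" and h': "h' \<in> H" "d h' = d h" and ne: "h' \<notin> vtx h"
    and lt: "pos (\<sigma> (qv h)) < pos (\<sigma> (qv h'))"
    and y: "y \<in> vtx h" and y': "y' \<in> vtx h'"
  shows "pos y < pos y'"
proof -
  have h'p: "0 < d h'" using h h' by simp
  let ?q = "qv h" and ?q' = "qv h'"
  have sq': "\<sigma> ?q' \<in> vtx h'" using qv_props(1)[OF h' (1) h'p] vtx_s by blast
  have sqH: "\<sigma> ?q' \<in> H" using sq' vtxH h' by blast
  have "\<not> pos (\<sigma> ?q') \<le> pos ?q"
  proof
    assume le: "pos (\<sigma> ?q') \<le> pos ?q"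
    have "pos (\<alpha> ?q) < pos (\<sigma> ?q')" using lt qv_props(6)[OF h] by simp
    then have "\<sigma> ?q' \<in> vtx h \<or> d h < d (\<sigma> ?q')" using qv_props(5)[OF h sqH] le by blast
    moreover have "\<sigma> ?q' \<notin> vtx h" using sq' ne vtx_eq vtx_self by metis
    moreover have "d (\<sigma> ?q') = d h" using d_vtx h' sq' by simp
    ultimately show False by simp
  qed
  moreover have "pos y \<le> pos ?q" using qv_range[OF h y] by simp
  moreover have "pos (\<sigma> ?q') \<le> pos y'" using qv_range[OF h' (1) h'p y'] qv_props(6)[OF h' (1) h'p] by simp
  ultimately show ?thesis by linarith
qed

end


context bm begin

definition B where "B = Suc N"
definition cand where "cand h = {g \<in> H. \<alpha> g \<in> vtx h \<and> Suc (d g) = d h}"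
definition ptree :: "('a \<Rightarrow> 'a) \<Rightarrow> bool" where
  "ptree P \<longleftrightarrow> (\<forall>h\<in>H. 0 < d h \<longrightarrow> P h \<in> H \<and> \<alpha> (P h) \<in> vtx h \<and> Suc (d (P h)) = d h) \<and>
     (\<forall>h\<in>H. \<forall>g\<in>vtx h. P g = P h)"
definition start where "start P h = (if d h = 0 then r else \<sigma> (\<alpha> (P h)))"
definition off where "off P h = (LEAST i. (\<sigma>^^i) (start P h) = h)"
fun kv :: "('a \<Rightarrow> 'a) \<Rightarrow> nat \<Rightarrow> 'a \<Rightarrow> nat" where
  "kv P 0 h = 0"
| "kv P (Suc n) h = kv P n (P h) * B + off P (P h)"
definition K where "K P h = kv P (d h) h"
definition EK where "EK P h = K P h * B + off P h"
definition KM where "KM P \<longleftrightarrow> (\<forall>h\<in>H. 0 < d h \<longrightarrow> (\<forall>g\<in>cand h. EK P (P h) \<le> EK P g))"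
definition edges where "edges P = {x. \<exists>c\<in>H. 0 < d c \<and> (x = P c \<or> x = \<alpha> (P c))}"

lemma vtx_r_d0: "h \<in> H \<Longrightarrow> d h = 0 \<Longrightarrow> g \<in> vtx h \<Longrightarrow> g \<in> vtx r"
  using d0 vtx_trans by blast

context
  fixes P assumes pt: "ptree P"
begin

lemma P_H: "h \<in> H \<Longrightarrow> 0 < d h \<Longrightarrow> P h \<in> H" using pt unfolding ptree_def by blast
lemma P_a: "h \<in> H \<Longrightarrow> 0 < d h \<Longrightarrow> \<alpha> (P h) \<in> vtx h" using pt unfolding ptree_def by blast
lemma P_d: "h \<in> H \<Longrightarrow> 0 < d h \<Longrightarrow> Suc (d (P h)) = d h" using pt unfolding ptree_def by blast
lemma P_const: "h \<in> H \<Longrightarrow> g \<in> vtx h \<Longrightarrow> P g = P h" using pt unfolding ptree_def by blast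

lemma start_vtx: "h \<in> H \<Longrightarrow> start P h \<in> vtx h"
proof -
  assume h: "h \<in> H"
  show ?thesis
  proof (cases "d h = 0")
    case True then show ?thesis using d0 h vtx_sym start_def by simp
  next
    case False then show ?thesis using P_a h vtx_s start_def by simp
  qed
qed

lemma start_H: "h \<in> H \<Longrightarrow> start P h \<in> H" using start_vtx vtxH by blast

lemma start_const: "h \<in> H \<Longrightarrow> g \<in> vtx h \<Longrightarrow> start P g = start P h"
  unfolding start_def using P_const d_vtx by simp

lemma off_spec: assumes h: "h \<in> H" shows "off P h < deg h" "(\<sigma>^^(off P h)) (start P h) = h"
proof -
  have "h \<in> vtx (start P h)" using start_vtx h vtx_sym by blast
  then obtain i where i: "i < deg (start P h)" "h = (\<sigma>^^i) (start P h)" using vtx_idx by blast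
  have dd: "deg (start P h) = deg h" using deg_vtx start_vtx h by blast
  show "(\<sigma>^^(off P h)) (start P h) = h" unfolding off_def using i by (metis (mono_tags, lifting) LeastI)
  have "off P h \<le> i" unfolding off_def using i by (metis (mono_tags, lifting) Least_le)
  then show "off P h < deg h" using i dd by simp
qed

lemma off_of: assumes h: "h \<in> H" and i: "i < deg h" shows "off P ((\<sigma>^^i) (start P h)) = i"
proof -
  let ?g = "(\<sigma>^^i) (start P h)"
  have sv: "start P h \<in> vtx h" using start_vtx h by blast
  have gv: "?g \<in> vtx h" using vtx_trans[OF sv vtx_fun] .
  have gH: "?g \<in> H" using gv vtxH h by blast
  have st: "start P ?g = start P h" using start_const h gv by blast
  have dd: "deg (start P h) = deg h" using deg_vtx sv by blast
  have "(\<sigma>^^(off P ?g)) (start P h) = ?g" "off P ?g < deg h"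
    using off_spec[OF gH] st deg_vtx[OF gv] by auto
  then show ?thesis using deg_inj[of "off P ?g" "start P h" i] i dd by simp
qed

lemma off_lt_B: "h \<in> H \<Longrightarrow> off P h < B"
proof -
  assume h: "h \<in> H"
  have "off P h < deg h" using off_spec h by blast
  moreover have "deg h \<le> N" using deg_le h by blast
  ultimately show ?thesis unfolding B_def by simp
qed

lemma K_const: "h \<in> H \<Longrightarrow> g \<in> vtx h \<Longrightarrow> K P g = K P h"
proof -
  assume a: "h \<in> H" "g \<in> vtx h"
  have dd: "d g = d h" using d_vtx a by blast
  show ?thesis
  proof (cases "d h")
    case 0 then show ?thesis using dd K_def by simp
  next
    case (Suc n) then show ?thesis using dd K_def P_const a by simp
  qed
qed

lemma K_suc: "h \<in> H \<Longrightarrow> 0 < d h \<Longrightarrow> K P h = EK P (P h)"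
proof -
  assume h: "h \<in> H" "0 < d h"
  then obtain n where n: "d h = Suc n" using not0_implies_Suc by blast
  then have "d (P h) = n" using P_d[OF h(1) h(2)] by simp
  then show ?thesis using n unfolding K_def EK_def by simp
qed

lemma EK_lt: "h \<in> H \<Longrightarrow> g \<in> H \<Longrightarrow> K P g < K P h \<Longrightarrow> EK P g < EK P h"
proof -
  assume a: "h \<in> H" "g \<in> H" "K P g < K P h"
  have "EK P g < (K P g + 1) * B" using off_lt_B[OF a(2)] unfolding EK_def by simp
  also have "\<dots> \<le> K P h * B" using a(3) mult_le_mono1[of "Suc (K P g)" "K P h" B] by simp
  also have "\<dots> \<le> EK P h" unfolding EK_def by simp
  finally show ?thesis .
qed

lemma EK_inj: "g \<in> H \<Longrightarrow> h \<in> H \<Longrightarrow> d g = d h \<Longrightarrow> EK P g = EK P h \<Longrightarrow> g = h"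
proof (induction "d h" arbitrary: g h)
  case 0
  have "start P g = r" "start P h = r" using 0 start_def by auto
  moreover have "K P g = 0" "K P h = 0" using 0 K_def by auto
  ultimately have "off P g = off P h" "start P g = start P h" using 0 unfolding EK_def by auto
  then show ?case using off_spec(2)[OF 0(2)] off_spec(2)[OF 0(3)] by metis
next
  case (Suc n)
  note gH = Suc.prems(1) and hH = Suc.prems(2)
  have pg: "0 < d g" "0 < d h" using Suc by auto
  have "K P g < K P h \<or> K P h < K P g \<or> K P g = K P h" by linarith
  then have eqK: "K P g = K P h" using EK_lt Suc.prems by (metis less_irrefl)
  have of: "off P g = off P h" using eqK Suc.prems(4) unfolding EK_def by simp
  have ek: "EK P (P g) = EK P (P h)" using eqK K_suc gH hH pg by simp
  have dPg: "d (P g) = n" using P_d[OF gH pg(1)] Suc.hyps(2) Suc.prems(3) by simp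
  have dPh: "d (P h) = n" using P_d[OF hH pg(2)] Suc.hyps(2) by simp
  have "P g = P h" using Suc.hyps(1)[of "P h" "P g"] P_H[OF gH pg(1)] P_H[OF hH pg(2)] dPg dPh ek by simp
  then have "start P g = start P h" using start_def pg by simp
  then show ?case using of off_spec(2)[OF gH] off_spec(2)[OF hH] by metis
qed

lemma K_inj: assumes "g \<in> H" "h \<in> H" "d g = d h" "K P g = K P h" shows "g \<in> vtx h"
proof (cases "d h = 0")
  case True then show ?thesis using assms d0 vtx_sym vtx_trans by metis
next
  case False
  then have "EK P (P g) = EK P (P h)" using assms K_suc by simp
  moreover have "d (P g) = d (P h)" using P_d assms False by (metis Suc_inject bot_nat_0.not_eq_extremum)
  ultimately have "P g = P h" using EK_inj P_H assms False by simp
  then have "\<alpha> (P h) \<in> vtx g" "\<alpha> (P h) \<in> vtx h" using P_a assms False by (metis neq0_conv)+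
  then show ?thesis using vtx_eq vtx_self by metis
qed

end
end


context bm1 begin

context
  fixes P assumes pt: "ptree P" and PS: "\<And>h. h \<in> H \<Longrightarrow> 0 < d h \<Longrightarrow> P h \<in> S"
begin

lemma P_qv: assumes h: "h \<in> H" "0 < d h" shows "\<alpha> (P h) = qv h"
proof -
  let ?x = "\<alpha> (P h)"
  have PH: "P h \<in> H" using P_H[OF pt h] .
  have xS: "?x \<in> S" using aS PS h by blast
  have xv: "?x \<in> vtx h" using P_a[OF pt h] .
  have "\<not> up ?x"
  proof
    assume "up ?x"
    then have "d (\<alpha> ?x) = Suc (d ?x)" by (rule up_d)
    moreover have "\<alpha> ?x = P h" using ainv PH by simp
    moreover have "d ?x = d h" using d_vtx h xv by simp
    ultimately show False using P_d[OF pt h] by simp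
  qed
  then have "down ?x" using S_updown xS by blast
  then show ?thesis using qv_props(3)[OF h xv] by simp
qed

lemma start_qv: "h \<in> H \<Longrightarrow> 0 < d h \<Longrightarrow> start P h = \<sigma> (qv h)"
  using P_qv start_def by simp

lemma pos_start: assumes h: "h \<in> H" "0 < d h" shows "pos (start P h) = Suc (pos (P h))"
proof -
  have "\<alpha> (qv h) = P h" using P_qv[OF h] ainv P_H[OF pt h] by metis
  then show ?thesis using start_qv[OF h] qv_props(6)[OF h] by simp
qed

lemma mono_start: assumes h: "h \<in> H" and ij: "i < j" "j < deg h"
  shows "pos ((\<sigma>^^i) (start P h)) < pos ((\<sigma>^^j) (start P h))"
proof (cases "d h = 0")
  case True
  then have "vtx h = vtx r" using d0 h vtx_eq by blast
  then show ?thesis using root_mono ij True start_def by simp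
next
  case False
  then show ?thesis using qv_props(4) h ij start_qv by simp
qed

lemma pos_off: assumes g: "g \<in> H" and g': "g' \<in> vtx g"
  shows "pos g < pos g' \<longleftrightarrow> off P g < off P g'"
proof -
  have g'H: "g' \<in> H" using vtxH g g' by blast
  have st: "start P g' = start P g" using start_const[OF pt g g'] .
  have dg: "deg g' = deg g" using deg_vtx g' by blast
  let ?i = "off P g" and ?j = "off P g'"
  have gi: "(\<sigma>^^?i) (start P g) = g" "?i < deg g" using off_spec[OF pt g] by auto
  have gj: "(\<sigma>^^?j) (start P g) = g'" "?j < deg g" using off_spec[OF pt g'H] st dg by auto
  have "?i < ?j \<Longrightarrow> pos g < pos g'" using mono_start[OF g] gi gj by metis
  moreover have "?j < ?i \<Longrightarrow> pos g' < pos g" using mono_start[OF g] gi gj by metis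
  moreover have "?i = ?j \<Longrightarrow> g = g'" using gi gj by metis
  ultimately show ?thesis by (metis less_irrefl linorder_neqE_nat order.asym)
qed

lemma link: "g \<in> H \<Longrightarrow> g' \<in> H \<Longrightarrow> d g = d g' \<Longrightarrow> (pos g < pos g' \<longleftrightarrow> EK P g < EK P g')"
proof (induction "d g" arbitrary: g g' rule: less_induct)
  case less
  note gH = less.prems(1) and g'H = less.prems(2) and dd = less.prems(3)
  show ?case
  proof (cases "g' \<in> vtx g")
    case True
    have "K P g' = K P g" using K_const[OF pt gH True] .
    then have "EK P g < EK P g' \<longleftrightarrow> off P g < off P g'" unfolding EK_def by simp
    then show ?thesis using pos_off[OF gH True] by simp
  next
    case False
    have gp: "0 < d g"
    proof (rule ccontr)
      assume "\<not> 0 < d g"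
      then have "d g = 0" "d g' = 0" using dd by auto
      then have "g \<in> vtx r" "g' \<in> vtx r" using d0 gH g'H by auto
      then show False using False vtx_eq vtx_sym by metis
    qed
    have g'p: "0 < d g'" using gp dd by simp
    have Kne: "K P g \<noteq> K P g'" using K_inj[OF pt g'H gH] dd False by metis
    have sv: "start P g \<in> vtx g" "start P g' \<in> vtx g'" using start_vtx[OF pt] gH g'H by auto
    have sne: "pos (start P g) \<noteq> pos (start P g')"
    proof
      assume "pos (start P g) = pos (start P g')"
      then have "start P g = start P g'" using pos_inj start_H[OF pt] gH g'H by blast
      then show False using sv False vtx_eq vtx_sym by metis
    qed
    have ng: "g \<notin> vtx g'" using False vtx_sym by blast
    have "pos g < pos g' \<longleftrightarrow> pos (start P g) < pos (start P g')"
    proof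
      assume lt: "pos g < pos g'"
      show "pos (start P g) < pos (start P g')"
      proof (rule ccontr)
        assume "\<not> pos (start P g) < pos (start P g')"
        then have "pos (\<sigma> (qv g')) < pos (\<sigma> (qv g))" using sne start_qv gH g'H gp g'p by simp
        then have "pos g' < pos g" using separation[OF g'H g'p gH _ ng _ vtx_self vtx_self] dd by simp
        then show False using lt by simp
      qed
    next
      assume "pos (start P g) < pos (start P g')"
      then have "pos (\<sigma> (qv g)) < pos (\<sigma> (qv g'))" using start_qv gH g'H gp g'p by simp
      then show "pos g < pos g'" using separation[OF gH gp g'H _ False _ vtx_self vtx_self] dd by simp
    qed
    also have "\<dots> \<longleftrightarrow> pos (P g) < pos (P g')" using pos_start gH g'H gp g'p by simp
    also have "\<dots> \<longleftrightarrow> EK P (P g) < EK P (P g')"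
    proof -
      have "d (P g) < d g" "d (P g) = d (P g')" using P_d[OF pt] gH g'H gp g'p dd by (metis lessI, metis Suc_inject)
      then show ?thesis using less.hyps P_H[OF pt] gH g'H gp g'p by blast
    qed
    also have "\<dots> \<longleftrightarrow> K P g < K P g'" using K_suc[OF pt] gH g'H gp g'p by simp
    also have "\<dots> \<longleftrightarrow> EK P g < EK P g'"
      using EK_lt[OF pt] Kne gH g'H by (metis linorder_neqE_nat order.asym)
    finally show ?thesis .
  qed
qed

lemma KM_iff: "KM P \<longleftrightarrow> (\<forall>h\<in>H. 0 < d h \<longrightarrow> (\<forall>g\<in>cand h. pos (P h) \<le> pos g))"
proof -
  have "EK P (P h) \<le> EK P g \<longleftrightarrow> pos (P h) \<le> pos g" if "h \<in> H" "0 < d h" "g \<in> cand h" for h g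
  proof -
    have "g \<in> H" "Suc (d g) = d h" using that cand_def by auto
    moreover have "P h \<in> H" "Suc (d (P h)) = d h" using P_H[OF pt] P_d[OF pt] that by auto
    ultimately have "pos g < pos (P h) \<longleftrightarrow> EK P g < EK P (P h)" using link by simp
    then show ?thesis by linarith
  qed
  then show ?thesis unfolding KM_def by auto
qed

end
end


context bm begin

context
  fixes P assumes pt: "ptree P" and km: "KM P"
begin

definition klt where "klt x y \<longleftrightarrow> d x < d y \<or> (d x = d y \<and> K P x < K P y)"
definition ch where "ch D = {c \<in> H. 0 < d c \<and> P c \<in> D}"
definition eds where "eds C = {x. \<exists>c\<in>C. x = P c \<or> x = \<alpha> (P c)}"
abbreviation R where "R \<equiv> vtx r"
definition vclosed where "vclosed A \<longleftrightarrow> A \<subseteq> H \<and> (\<forall>x\<in>A. \<forall>y\<in>vtx x. y \<in> A)"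
definition dclosed where "dclosed D \<longleftrightarrow> D \<subseteq> H \<and> (\<forall>x\<in>D. \<forall>y\<in>H. klt y x \<or> y \<in> vtx x \<longrightarrow> y \<in> D)"
definition Inv where "Inv D st \<longleftrightarrow> (case st of (V, E, Q) \<Rightarrow> dclosed D \<and> V = vtx ` (D \<union> ch D \<union> R) \<and>
   E = eds (ch D) \<and> sorted_wrt klt Q \<and> set Q = start P ` ((ch D \<union> R) - D))"

lemma klt_vtx1: "x \<in> H \<Longrightarrow> y \<in> vtx x \<Longrightarrow> klt y z \<longleftrightarrow> klt x z"
  unfolding klt_def using d_vtx K_const[OF pt] by simp
lemma klt_vtx2: "x \<in> H \<Longrightarrow> y \<in> vtx x \<Longrightarrow> klt z y \<longleftrightarrow> klt z x"
  unfolding klt_def using d_vtx K_const[OF pt] by simp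
lemma klt_irr: "\<not> klt x x" unfolding klt_def by simp
lemma klt_trans: "klt x y \<Longrightarrow> klt y z \<Longrightarrow> klt x z" unfolding klt_def by auto
lemma klt_asym: "klt x y \<Longrightarrow> \<not> klt y x" unfolding klt_def by auto
lemma klt_total: "x \<in> H \<Longrightarrow> y \<in> H \<Longrightarrow> klt x y \<or> klt y x \<or> y \<in> vtx x"
  unfolding klt_def using K_inj[OF pt] by (metis linorder_neqE_nat)
lemma klt_P: "x \<in> H \<Longrightarrow> 0 < d x \<Longrightarrow> klt (P x) x"
  unfolding klt_def using P_d[OF pt] by (metis lessI)

lemma vclosed_img: "vclosed A \<Longrightarrow> vtx c \<in> vtx ` A \<longleftrightarrow> c \<in> A"
  unfolding vclosed_def using vtx_self by (metis (no_types, lifting) image_iff vtx_eq)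

lemma vclosed_R: "vclosed R" unfolding vclosed_def using vtxH rH vtx_trans by blast
lemma vclosed_ch: "vclosed (ch D)"
  unfolding vclosed_def ch_def using vtxH d_vtx P_const[OF pt] by auto
lemma vclosed_dclosed: "dclosed D \<Longrightarrow> vclosed D" unfolding vclosed_def dclosed_def
  using vtxH by blast
lemma vclosed_Un: "vclosed A \<Longrightarrow> vclosed A2 \<Longrightarrow> vclosed (A \<union> A2)" unfolding vclosed_def by blast

lemma start_idem: "x \<in> H \<Longrightarrow> start P (start P x) = start P x"
  using start_const[OF pt] start_vtx[OF pt] by blast

lemma R_d: "x \<in> R \<Longrightarrow> d x = 0" using d0 vtxH rH by blast
lemma start_R: "x \<in> R \<Longrightarrow> start P x = r" using R_d start_def by simp

lemma eds_Un: "eds (A \<union> A2) = eds A \<union> eds A2" unfolding eds_def by blast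

lemma eds_vtx: assumes c: "c \<in> H" shows "eds (A \<union> vtx c) = eds A \<union> {P c, \<alpha> (P c)}"
proof -
  have "eds (vtx c) = {P c, \<alpha> (P c)}"
  proof
    show "eds (vtx c) \<subseteq> {P c, \<alpha> (P c)}"
    proof
      fix x assume "x \<in> eds (vtx c)"
      then obtain c' where c': "c' \<in> vtx c" "x = P c' \<or> x = \<alpha> (P c')" unfolding eds_def by blast
      have "P c' = P c" using P_const[OF pt c c'(1)] .
      then show "x \<in> {P c, \<alpha> (P c)}" using c' by auto
    qed
    show "{P c, \<alpha> (P c)} \<subseteq> eds (vtx c)" unfolding eds_def using vtx_self by blast
  qed
  then show ?thesis using eds_Un by simp
qed

lemma Inv_init: "Inv {} ({vtx r}, {}, [r])"
proof -
  have "vtx ` R = {vtx r}" using vtx_self vtx_eq by auto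
  moreover have "start P ` R = {r}" using start_R vtx_self by auto
  moreover have "ch {} = {}" "eds {} = {}" unfolding ch_def eds_def by auto
  ultimately show ?thesis unfolding Inv_def dclosed_def by simp
qed

lemma Inv_D:
  assumes I: "Inv D (V, E, s # Q')"
  shows "s \<in> H" "s \<notin> D" "D = {x \<in> H. klt x s}" "start P s = s" "R \<subseteq> D \<union> vtx s"
    "s \<in> (ch D \<union> R) - D"
proof -
  have dc: "dclosed D" and srt: "sorted_wrt klt (s # Q')"
    and sq: "set (s # Q') = start P ` ((ch D \<union> R) - D)" using I unfolding Inv_def by auto
  have vD: "vclosed D" using vclosed_dclosed[OF dc] .
  have vA: "vclosed (ch D \<union> R)" using vclosed_Un vclosed_ch vclosed_R by blast
  have AH: "ch D \<union> R \<subseteq> H" using vA unfolding vclosed_def by blast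
  obtain y where y: "y \<in> (ch D \<union> R) - D" "s = start P y" using sq by auto
  have yH: "y \<in> H" using y AH by blast
  have sv: "s \<in> vtx y" using y start_vtx[OF pt yH] by simp
  show sH: "s \<in> H" using sv vtxH yH by blast
  show sA: "s \<in> (ch D \<union> R) - D"
  proof -
    have "s \<in> ch D \<union> R" using vA y sv unfolding vclosed_def by blast
    moreover have "s \<notin> D"
    proof
      assume "s \<in> D"
      then have "y \<in> D" using vD vtx_sym sv unfolding vclosed_def by blast
      then show False using y by blast
    qed
    ultimately show ?thesis by blast
  qed
  then show sD: "s \<notin> D" by blast
  show "start P s = s" using y start_idem yH by simp
  have QA: "\<not> klt x s" if x: "x \<in> (ch D \<union> R) - D" for x
  proof
    assume lt: "klt x s"
    have xH: "x \<in> H" using x AH by blast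
    have "start P x \<in> set (s # Q')" using sq x by blast
    moreover have sxv: "start P x \<in> vtx x" using start_vtx[OF pt xH] .
    ultimately consider "start P x = s" | "start P x \<in> set Q'" by auto
    then show False
    proof cases
      case 1
      then have "klt s s" using lt klt_vtx1[OF xH sxv] by simp
      then show False using klt_irr by blast
    next
      case 2
      then have "klt s (start P x)" using srt by simp
      then have "klt s x" using klt_vtx2[OF xH sxv] by simp
      then show False using lt klt_asym by blast
    qed
  qed
  have lowD: "x \<in> D" if "x \<in> H" "klt x s" for x
    using that
  proof (induction "d x" arbitrary: x rule: less_induct)
    case less
    show ?case
    proof (cases "d x = 0")
      case True
      then have "x \<in> R" using d0 less by blast
      then show ?thesis using QA less by blast
    next
      case False
      then have "klt (P x) x" using klt_P less by simp
      then have "klt (P x) s" using klt_trans less by blast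
      moreover have "d (P x) < d x" using P_d[OF pt] less False by (metis lessI neq0_conv)
      ultimately have "P x \<in> D" using less P_H[OF pt] False by blast
      then have "x \<in> ch D" using less False unfolding ch_def by simp
      then show ?thesis using QA less by blast
    qed
  qed
  show "D = {x \<in> H. klt x s}"
  proof
    show "{x \<in> H. klt x s} \<subseteq> D" using lowD by blast
    show "D \<subseteq> {x \<in> H. klt x s}"
    proof
      fix x assume x: "x \<in> D"
      have xH: "x \<in> H" using x dc unfolding dclosed_def by blast
      have "klt x s"
      proof (rule ccontr)
        assume "\<not> klt x s"
        then have "klt s x \<or> s \<in> vtx x" using klt_total[OF xH sH] by blast
        then have "s \<in> D" using dc x sH unfolding dclosed_def by blast
        then show False using sD by blast
      qed
      then show "x \<in> {x \<in> H. klt x s}" using xH by blast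
    qed
  qed
  show "R \<subseteq> D \<union> vtx s"
  proof
    fix x assume x: "x \<in> R"
    have xH: "x \<in> H" using x vtxH rH by blast
    show "x \<in> D \<union> vtx s"
    proof (cases "d s = 0")
      case True
      then have "s \<in> R" using d0 sH by blast
      then have "x \<in> vtx s" using x vtx_eq vtx_sym by metis
      then show ?thesis by blast
    next
      case False
      then have "klt x s" using R_d[OF x] klt_def by simp
      then show ?thesis using lowD xH by blast
    qed
  qed
qed

definition Cs where "Cs D s i = ch D \<union> {c \<in> H. 0 < d c \<and> P c \<in> vtx s \<and> off P (P c) < i}"

definition InvI where "InvI D s i st \<longleftrightarrow> (case st of (V, E, Q) \<Rightarrow>
   V = vtx ` ((D \<union> vtx s) \<union> Cs D s i \<union> R) \<and> E = eds (Cs D s i) \<and> sorted_wrt klt Q \<and>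
   set Q = start P ` (Cs D s i - (D \<union> vtx s)))"

lemma vclosed_Cs: "s \<in> H \<Longrightarrow> vclosed (Cs D s i)"
proof -
  assume sH: "s \<in> H"
  have "vclosed {c \<in> H. 0 < d c \<and> P c \<in> vtx s \<and> off P (P c) < i}"
    unfolding vclosed_def using vtxH d_vtx P_const[OF pt] by auto
  then show ?thesis unfolding Cs_def using vclosed_Un vclosed_ch by blast
qed

lemma inner_base:
  assumes I: "Inv D (V0, E0, s # Q')"
  shows "InvI D s 0 (V0, E0, Q')"
proof -
  note ID = Inv_D[OF I]
  have dc: "dclosed D" and V0: "V0 = vtx ` (D \<union> ch D \<union> R)" and E0: "E0 = eds (ch D)"
    and srt: "sorted_wrt klt (s # Q')"
    and sq: "set (s # Q') = start P ` ((ch D \<union> R) - D)" using I unfolding Inv_def by auto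
  have C0: "Cs D s 0 = ch D" unfolding Cs_def by simp
  have "vtx ` ((D \<union> vtx s) \<union> ch D \<union> R) = vtx ` (D \<union> ch D \<union> R) \<union> vtx ` vtx s" by blast
  moreover have "vtx ` vtx s = {vtx s}" using vtx_eq vtx_self by blast
  moreover have "vtx s \<in> vtx ` (D \<union> ch D \<union> R)" using ID(6) by blast
  ultimately have Veq: "V0 = vtx ` ((D \<union> vtx s) \<union> ch D \<union> R)" using V0 by auto
  have sQ: "s \<notin> set Q'" using srt klt_irr by auto
  have vA: "vclosed (ch D \<union> R)" using vclosed_Un vclosed_ch vclosed_R by blast
  have AH: "ch D \<union> R \<subseteq> H" using vA unfolding vclosed_def by blast
  have "set Q' = start P ` (ch D - (D \<union> vtx s))"
  proof
    show "set Q' \<subseteq> start P ` (ch D - (D \<union> vtx s))"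
    proof
      fix q assume q: "q \<in> set Q'"
      then obtain y where y: "y \<in> (ch D \<union> R) - D" "q = start P y" using sq by auto
      have yH: "y \<in> H" using y AH by blast
      have "y \<notin> vtx s"
      proof
        assume "y \<in> vtx s"
        then have "start P y = start P s" using start_const[OF pt ID(1)] by blast
        then show False using ID(4) y q sQ by simp
      qed
      moreover have "y \<notin> R" using ID(5) y \<open>y \<notin> vtx s\<close> by blast
      ultimately show "q \<in> start P ` (ch D - (D \<union> vtx s))" using y by blast
    qed
    show "start P ` (ch D - (D \<union> vtx s)) \<subseteq> set Q'"
    proof
      fix q assume "q \<in> start P ` (ch D - (D \<union> vtx s))"
      then obtain y where y: "y \<in> ch D" "y \<notin> D" "y \<notin> vtx s" "q = start P y" by blast
      have yH: "y \<in> H" using y AH by blast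
      have "q \<in> set (s # Q')" using sq y by blast
      moreover have "q \<noteq> s"
      proof
        assume "q = s"
        then have "s \<in> vtx y" using start_vtx[OF pt yH] y by simp
        then show False using y vtx_sym by blast
      qed
      ultimately show "q \<in> set Q'" by simp
    qed
  qed
  then show ?thesis unfolding InvI_def using Veq E0 srt C0 by simp
qed

lemma inner_step:
  assumes I: "Inv D (V0, E0, s # Q')" and i: "i < deg s" and st: "InvI D s i (V, E, Q)"
  shows "InvI D s (Suc i) (inspect \<sigma> \<alpha> (V, E, Q) ((\<sigma>^^i) s))"
proof -
  note ID = Inv_D[OF I]
  have sH: "s \<in> H" using ID(1) .
  define D' where "D' = D \<union> vtx s"
  define x where "x = (\<sigma>^^i) s"
  define c where "c = \<alpha> x"
  have V: "V = vtx ` (D' \<union> Cs D s i \<union> R)" and E: "E = eds (Cs D s i)" and srt: "sorted_wrt klt Q"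
    and sq: "set Q = start P ` (Cs D s i - D')" using st unfolding InvI_def D'_def by auto
  have xv: "x \<in> vtx s" unfolding x_def by (rule vtx_fun)
  have xH: "x \<in> H" using xv vtxH sH by blast
  have cH: "c \<in> H" using aH xH c_def by blast
  have offx: "off P x = i" using off_of[OF pt sH i] ID(4) x_def by simp
  have dx: "d x = d s" using d_vtx sH xv by blast
  have Kx: "K P x = K P s" using K_const[OF pt sH xv] .
  have dc: "dclosed D" using I unfolding Inv_def by auto
  have "vclosed (vtx s)" unfolding vclosed_def using vtxH[OF sH] vtx_trans by blast
  then have vD': "vclosed D'" unfolding D'_def using vclosed_Un vclosed_dclosed[OF dc] by blast
  have vA: "vclosed (D' \<union> Cs D s i \<union> R)" using vclosed_Un vD' vclosed_Cs[OF sH] vclosed_R by blast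
  have Vc: "vtx c \<in> V \<longleftrightarrow> c \<in> D' \<union> Cs D s i \<union> R" using V vclosed_img[OF vA] by simp
  define NS where "NS = {c' \<in> H. 0 < d c' \<and> P c' \<in> vtx s \<and> off P (P c') = i}"
  have CS: "Cs D s (Suc i) = Cs D s i \<union> NS" unfolding Cs_def NS_def by auto
  have NSx: "P c' = x" if "c' \<in> NS" for c'
  proof -
    have c': "c' \<in> H" "0 < d c'" "P c' \<in> vtx s" "off P (P c') = i" using that NS_def by auto
    have PH: "P c' \<in> H" using P_H[OF pt c'(1,2)] .
    have "start P (P c') = s" using start_const[OF pt sH c'(3)] ID(4) by simp
    then show ?thesis using off_spec(2)[OF pt PH] c'(4) x_def by simp
  qed
  have NSv: "c' \<in> vtx c" if "c' \<in> NS" for c'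
  proof -
    have c': "c' \<in> H" "0 < d c'" using that NS_def by auto
    have "c \<in> vtx c'" using P_a[OF pt c'] NSx[OF that] c_def by simp
    then show ?thesis using vtx_sym by blast
  qed
  show ?thesis
  proof (cases "0 < d c \<and> P c = x")
    case True
    have dcs: "d c = Suc (d s)" using P_d[OF pt cH] True dx by simp
    have cnA: "c \<notin> D' \<union> Cs D s i \<union> R"
    proof -
      have "c \<notin> R" using R_d True by auto
      moreover have "c \<notin> D" using ID(3) dcs klt_def by auto
      moreover have "c \<notin> vtx s" using d_vtx sH dcs by fastforce
      moreover have "c \<notin> ch D"
      proof
        assume "c \<in> ch D"
        then have "x \<in> D" using True ch_def by simp
        then have "klt x s" using ID(3) by blast
        then show False using klt_vtx1[OF sH xv] klt_irr by simp
      qed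
      moreover have "\<not> (off P (P c) < i)" using True offx by simp
      ultimately show ?thesis unfolding D'_def Cs_def by blast
    qed
    have NSe: "NS = vtx c"
    proof
      show "NS \<subseteq> vtx c" using NSv by blast
      show "vtx c \<subseteq> NS"
      proof
        fix c' assume c': "c' \<in> vtx c"
        have "c' \<in> H" "d c' = d c" "P c' = P c" using vtxH d_vtx P_const[OF pt] cH c' by auto
        then show "c' \<in> NS" using True xv offx NS_def by simp
      qed
    qed
    have stc: "\<sigma> (\<alpha> x) = start P c" using start_def True c_def by simp
    have insp: "inspect \<sigma> \<alpha> (V, E, Q) x = (insert (vtx c) V, E \<union> {x, \<alpha> x}, Q @ [start P c])"
      unfolding inspect_def using Vc cnA stc c_def by simp
    have vv: "vtx ` vtx c = {vtx c}" using vtx_eq vtx_self by blast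
    have "vtx ` (D' \<union> Cs D s (Suc i) \<union> R) = vtx ` (D' \<union> Cs D s i \<union> R) \<union> vtx ` vtx c"
      using CS NSe by (simp add: image_Un Un_ac)
    then have V': "insert (vtx c) V = vtx ` (D' \<union> Cs D s (Suc i) \<union> R)" using V vv by simp
    have E': "E \<union> {x, \<alpha> x} = eds (Cs D s (Suc i))" using E CS NSe eds_vtx[OF cH] True by simp
    have lt: "klt q (start P c)" if q: "q \<in> set Q" for q
    proof -
      obtain y where y: "y \<in> Cs D s i" "y \<notin> D'" "q = start P y" using sq q by auto
      have yC: "y \<in> H" "0 < d y" using y(1) unfolding Cs_def ch_def by auto
      have PyH: "P y \<in> H" using P_H[OF pt yC] .
      have Ky: "K P y = EK P (P y)" using K_suc[OF pt yC] .
      have Kc: "K P c = EK P x" using K_suc[OF pt cH] True by simp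
      have dy: "d y = Suc (d (P y))" using P_d[OF pt yC] by simp
      have "klt y c"
      proof (cases "P y \<in> D")
        case True
        then have "klt (P y) s" using ID(3) by blast
        then have "klt (P y) x" using klt_vtx2[OF sH xv] by simp
        then show ?thesis unfolding klt_def using dy dcs dx Ky Kc EK_lt[OF pt xH PyH] by auto
      next
        case False
        then have Pyv: "P y \<in> vtx s" "off P (P y) < i" using y(1) unfolding Cs_def ch_def by auto
        have "K P (P y) = K P x" using K_const[OF pt sH Pyv(1)] Kx by simp
        then have "EK P (P y) < EK P x" using Pyv offx unfolding EK_def by simp
        moreover have "d (P y) = d s" using d_vtx sH Pyv by blast
        ultimately show ?thesis unfolding klt_def using dy dcs Ky Kc by simp
      qed
      then show ?thesis using y klt_vtx1 klt_vtx2 start_vtx[OF pt] yC(1) cH by metis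
    qed
    have srt': "sorted_wrt klt (Q @ [start P c])" using srt lt by (simp add: sorted_wrt_append)
    have "Cs D s (Suc i) - D' = (Cs D s i - D') \<union> vtx c" using CS NSe cnA vD' vtx_self
      unfolding vclosed_def by (metis Un_Diff Un_iff Diff_triv disjoint_iff vtx_sym)
    moreover have "start P ` vtx c = {start P c}" using start_const[OF pt cH] vtx_self by blast
    ultimately have sq': "set (Q @ [start P c]) = start P ` (Cs D s (Suc i) - D')" using sq by auto
    show ?thesis unfolding InvI_def x_def[symmetric] insp using V' E' srt' sq' D'_def by simp
  next
    case False
    have NSe: "NS = {}"
    proof -
      { fix c' assume c': "c' \<in> NS"
        have "c' \<in> H" "0 < d c'" using c' NS_def by auto
        then have "P c = P c'" "d c = d c'" using P_const[OF pt] d_vtx NSv[OF c'] by (metis vtx_sym)+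
        then have False using False NSx[OF c'] \<open>0 < d c'\<close> by simp }
      then show ?thesis by blast
    qed
    have cA: "c \<in> D' \<union> Cs D s i \<union> R"
    proof (cases "d x = Suc (d c)")
      case True
      then have "klt c s" using dx klt_def by simp
      then show ?thesis using ID(3) cH D'_def by blast
    next
      case False
      then have dcx: "d c = Suc (d x)" using adj xH c_def by blast
      then have dcp: "0 < d c" by simp
      then have Pne: "P c \<noteq> x" using \<open>\<not> (0 < d c \<and> P c = x)\<close> by simp
      have PcH: "P c \<in> H" using P_H[OF pt cH dcp] .
      have dPc: "d (P c) = d x" using P_d[OF pt cH dcp] dcx by simp
      have "x \<in> cand c" unfolding cand_def using xH c_def vtx_self dcx by simp
      then have "EK P (P c) \<le> EK P x" using km cH dcp unfolding KM_def by blast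
      moreover have "EK P (P c) \<noteq> EK P x" using EK_inj[OF pt PcH xH dPc] Pne by blast
      ultimately have EKlt: "EK P (P c) < EK P x" by simp
      consider "K P (P c) < K P s" | "K P (P c) = K P s" | "K P s < K P (P c)" by linarith
      then show ?thesis
      proof cases
        case 1
        then have "klt (P c) s" using dPc dx klt_def by simp
        then have "P c \<in> D" using ID(3) PcH by blast
        then show ?thesis unfolding Cs_def ch_def using cH dcp by blast
      next
        case 2
        then have Pv: "P c \<in> vtx s" using K_inj[OF pt PcH sH] dPc dx by simp
        then have "off P (P c) < i" using EKlt 2 Kx offx unfolding EK_def by simp
        then show ?thesis unfolding Cs_def using cH dcp Pv by blast
      next
        case 3
        then have "EK P x < EK P (P c)" using EK_lt[OF pt PcH xH] Kx by simp
        then show ?thesis using EKlt by simp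
      qed
    qed
    have insp: "inspect \<sigma> \<alpha> (V, E, Q) x = (V, E, Q)"
      unfolding inspect_def using Vc cA c_def by simp
    show ?thesis unfolding InvI_def x_def[symmetric] insp using V E srt sq CS NSe D'_def by simp
  qed
qed

lemma inner_fold:
  assumes I: "Inv D (V0, E0, s # Q')"
  shows "i \<le> deg s \<Longrightarrow> InvI D s i (foldl (inspect \<sigma> \<alpha>) (V0, E0, Q') (map (\<lambda>j. (\<sigma>^^j) s) [0..<i]))"
proof (induction i)
  case 0 then show ?case using inner_base[OF I] by simp
next
  case (Suc i)
  obtain V E Q where st: "foldl (inspect \<sigma> \<alpha>) (V0, E0, Q') (map (\<lambda>j. (\<sigma>^^j) s) [0..<i]) = (V, E, Q)"
    by (metis prod_cases3)
  have "InvI D s i (V, E, Q)" using Suc st by simp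
  then have "InvI D s (Suc i) (inspect \<sigma> \<alpha> (V, E, Q) ((\<sigma>^^i) s))"
    using inner_step[OF I] Suc.prems by simp
  then show ?case using st by simp
qed

lemma outer_step:
  assumes I: "Inv D (V, E, s # Q')"
  shows "Inv (D \<union> vtx s) (bfs_step \<sigma> \<alpha> (V, E, s # Q'))"
proof -
  note ID = Inv_D[OF I]
  have sH: "s \<in> H" using ID(1) .
  define D' where "D' = D \<union> vtx s"
  have bs: "bfs_step \<sigma> \<alpha> (V, E, s # Q') = foldl (inspect \<sigma> \<alpha>) (V, E, Q') (map (\<lambda>j. (\<sigma>^^j) s) [0..<deg s])"
    unfolding bfs_step_def ccw_list_def by simp
  obtain V' E' Q'' where st: "bfs_step \<sigma> \<alpha> (V, E, s # Q') = (V', E', Q'')" by (metis prod_cases3)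
  have II: "InvI D s (deg s) (V', E', Q'')" using inner_fold[OF I, of "deg s"] bs st by simp
  have Cd: "Cs D s (deg s) = ch D'"
  proof
    show "Cs D s (deg s) \<subseteq> ch D'" unfolding Cs_def ch_def D'_def by auto
    show "ch D' \<subseteq> Cs D s (deg s)"
    proof
      fix c assume c: "c \<in> ch D'"
      then have cc: "c \<in> H" "0 < d c" "P c \<in> D \<or> P c \<in> vtx s" unfolding ch_def D'_def by auto
      show "c \<in> Cs D s (deg s)"
      proof (cases "P c \<in> D")
        case True then show ?thesis using cc unfolding Cs_def ch_def by simp
      next
        case False
        then have Pv: "P c \<in> vtx s" using cc by simp
        have "off P (P c) < deg (P c)" using off_spec(1)[OF pt P_H[OF pt cc(1,2)]] .
        then have "off P (P c) < deg s" using deg_vtx Pv by simp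
        then show ?thesis using cc Pv unfolding Cs_def by simp
      qed
    qed
  qed
  have dc': "dclosed D'"
    unfolding dclosed_def
  proof (intro conjI ballI impI)
    show "D' \<subseteq> H" using ID(3) vtxH sH D'_def by auto
    fix x y assume x: "x \<in> D'" and y: "y \<in> H" and yx: "klt y x \<or> y \<in> vtx x"
    show "y \<in> D'"
    proof (cases "x \<in> D")
      case True
      then have xs: "klt x s" "x \<in> H" using ID(3) by auto
      then have "klt y s" using yx klt_trans klt_vtx1[OF xs(2)] by metis
      then show ?thesis using ID(3) y D'_def by blast
    next
      case False
      then have xv: "x \<in> vtx s" using x D'_def by simp
      show ?thesis
      proof (cases "klt y x")
        case True
        then have "klt y s" using klt_vtx2[OF sH xv] by simp
        then show ?thesis using ID(3) y D'_def by blast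
      next
        case False
        then have "y \<in> vtx x" using yx by simp
        then show ?thesis using vtx_trans xv D'_def by blast
      qed
    qed
  qed
  have RD: "R \<subseteq> D'" using ID(5) D'_def by simp
  have "V' = vtx ` (D' \<union> ch D' \<union> R)" "E' = eds (ch D')" "sorted_wrt klt Q''"
    "set Q'' = start P ` ((ch D' \<union> R) - D')"
    using II Cd RD unfolding InvI_def D'_def[symmetric] by auto
  then show ?thesis unfolding Inv_def st D'_def[symmetric] using dc' by simp
qed

lemma iter: "\<exists>D. Inv D ((bfs_step \<sigma> \<alpha> ^^ j) ({vtx r}, {}, [r])) \<and>
   (snd (snd ((bfs_step \<sigma> \<alpha> ^^ j) ({vtx r}, {}, [r]))) = [] \<or> j \<le> card D)"
proof (induction j)
  case 0 then show ?case using Inv_init by auto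
next
  case (Suc j)
  then obtain D where D: "Inv D ((bfs_step \<sigma> \<alpha> ^^ j) ({vtx r}, {}, [r]))"
    "snd (snd ((bfs_step \<sigma> \<alpha> ^^ j) ({vtx r}, {}, [r]))) = [] \<or> j \<le> card D" by blast
  obtain V E Q where st: "(bfs_step \<sigma> \<alpha> ^^ j) ({vtx r}, {}, [r]) = (V, E, Q)" by (metis prod_cases3)
  show ?case
  proof (cases Q)
    case Nil
    then have "bfs_step \<sigma> \<alpha> (V, E, Q) = (V, E, Q)" unfolding bfs_step_def by simp
    then show ?thesis using D st Nil by auto
  next
    case (Cons s Q')
    have I: "Inv D (V, E, s # Q')" using D st Cons by simp
    have I': "Inv (D \<union> vtx s) (bfs_step \<sigma> \<alpha> (V, E, s # Q'))" using outer_step[OF I] .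
    have DH: "D \<union> vtx s \<subseteq> H" using I' unfolding Inv_def dclosed_def by (auto split: prod.splits)
    then have "finite (D \<union> vtx s)" using finH finite_subset by blast
    moreover have "s \<notin> D" using Inv_D[OF I] by blast
    ultimately have "card D < card (D \<union> vtx s)" using vtx_self
      by (metis Un_iff psubsetI psubset_card_mono sup_ge1)
    moreover have "j \<le> card D" using D st Cons by simp
    ultimately show ?thesis using I' st Cons by (intro exI[of _ "D \<union> vtx s"]) simp
  qed
qed

theorem bfs_edges: "rightmost_bfs_tree H \<sigma> \<alpha> r = edges P"
proof -
  obtain D where D: "Inv D ((bfs_step \<sigma> \<alpha> ^^ N) ({vtx r}, {}, [r]))"
    "snd (snd ((bfs_step \<sigma> \<alpha> ^^ N) ({vtx r}, {}, [r]))) = [] \<or> N \<le> card D" using iter by blast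
  obtain V E Q where st: "(bfs_step \<sigma> \<alpha> ^^ N) ({vtx r}, {}, [r]) = (V, E, Q)" by (metis prod_cases3)
  have I: "dclosed D" "E = eds (ch D)" "set Q = start P ` ((ch D \<union> R) - D)"
    using D st unfolding Inv_def by auto
  have DH: "D \<subseteq> H" using I dclosed_def by blast
  have chH: "ch D \<union> R \<subseteq> H" using vclosed_Un vclosed_ch vclosed_R vclosed_def by blast
  have Qn: "Q = []"
  proof (cases "Q = []")
    case False
    then have "N \<le> card D" using D st by simp
    then have "D = H" using card_seteq[OF finH DH] by simp
    then have "set Q = {}" using I chH by auto
    then show ?thesis by simp
  qed simp
  then have sub: "ch D \<union> R \<subseteq> D" using I by auto
  have HD: "x \<in> D" if "x \<in> H" for x
    using that
  proof (induction "d x" arbitrary: x rule: less_induct)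
    case less
    show ?case
    proof (cases "d x = 0")
      case True then show ?thesis using d0 less sub by blast
    next
      case False
      then have "d (P x) < d x" "P x \<in> H" using P_d[OF pt] P_H[OF pt] less by (metis lessI neq0_conv)+
      then have "P x \<in> D" using less by blast
      then have "x \<in> ch D" using less False ch_def by simp
      then show ?thesis using sub by blast
    qed
  qed
  have "ch D = {c \<in> H. 0 < d c}" using HD P_H[OF pt] unfolding ch_def by auto
  then have "E = edges P" using I unfolding eds_def edges_def by auto
  then show ?thesis unfolding rightmost_bfs_tree_def using st by simp
qed

end
end


context bm begin

fun PP :: "nat \<Rightarrow> 'a \<Rightarrow> 'a" where
  "PP 0 = (\<lambda>h. r)"
| "PP (Suc n) = (\<lambda>h. if d h = Suc n then (SOME g. g \<in> cand h \<and> (\<forall>g'\<in>cand h. EK (PP n) g \<le> EK (PP n) g'))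
     else PP n h)"

definition Pst where "Pst h = PP (d h) h"

lemma PP_stable: "d h \<le> n \<Longrightarrow> PP n h = Pst h"
proof (induction n)
  case 0 then show ?case unfolding Pst_def by simp
next
  case (Suc n)
  show ?case
  proof (cases "d h = Suc n")
    case True then show ?thesis unfolding Pst_def by simp
  next
    case False then show ?thesis using Suc by simp
  qed
qed

lemma cand_vtx: "h \<in> H \<Longrightarrow> g \<in> vtx h \<Longrightarrow> cand g = cand h"
  unfolding cand_def using vtx_eq d_vtx by simp

lemma cand_ex: assumes "h \<in> H" "d h = Suc n"
  shows "\<exists>g. g \<in> cand h \<and> (\<forall>g'\<in>cand h. f g \<le> (f g' :: nat))"
proof -
  obtain g where "g \<in> H" "d g = n" "\<alpha> g \<in> vtx h" using d_Suc assms by blast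
  then have "g \<in> cand h" unfolding cand_def using assms by simp
  then show ?thesis using ex_has_least_nat[of "\<lambda>g. g \<in> cand h" g f] by blast
qed

lemma Pst_props: assumes "h \<in> H" "d h = Suc n"
  shows "Pst h \<in> cand h" "\<forall>g'\<in>cand h. EK (PP n) (Pst h) \<le> EK (PP n) g'"
proof -
  have "Pst h = (SOME g. g \<in> cand h \<and> (\<forall>g'\<in>cand h. EK (PP n) g \<le> EK (PP n) g'))"
    unfolding Pst_def using assms by simp
  then have c: "Pst h \<in> cand h \<and> (\<forall>g'\<in>cand h. EK (PP n) (Pst h) \<le> EK (PP n) g')"
    using someI_ex[OF cand_ex[OF assms, of "EK (PP n)"]] by simp
  from c show "Pst h \<in> cand h" by (rule conjunct1)
  from c show "\<forall>g'\<in>cand h. EK (PP n) (Pst h) \<le> EK (PP n) g'" by (rule conjunct2)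
qed

lemma ptree_Pst: "ptree Pst"
proof -
  have A: "Pst h \<in> H \<and> \<alpha> (Pst h) \<in> vtx h \<and> Suc (d (Pst h)) = d h" if h: "h \<in> H" "0 < d h" for h
  proof -
    obtain n where n: "d h = Suc n" using not0_implies_Suc h by blast
    have "Pst h \<in> cand h" using Pst_props[OF h(1) n] by blast
    then show ?thesis unfolding cand_def by simp
  qed
  have B: "Pst g = Pst h" if h: "h \<in> H" and g: "g \<in> vtx h" for h g
  proof -
    have dg: "d g = d h" using d_vtx h g by blast
    show "Pst g = Pst h"
    proof (cases "d h")
      case 0 then show ?thesis using dg unfolding Pst_def by simp
    next
      case (Suc n) then show ?thesis using dg cand_vtx[OF h g] unfolding Pst_def by simp
    qed
  qed
  show ?thesis unfolding ptree_def using A B by blast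
qed

lemma agree:
  assumes pt1: "ptree P1" and ag: "\<And>x. x \<in> H \<Longrightarrow> d x \<le> n \<Longrightarrow> P1 x = P2 x"
  shows "g \<in> H \<Longrightarrow> d g \<le> n \<Longrightarrow> EK P1 g = EK P2 g"
proof -
  have st: "start P1 g = start P2 g" if "g \<in> H" "d g \<le> n" for g
    unfolding start_def using ag that by simp
  have of: "off P1 g = off P2 g" if "g \<in> H" "d g \<le> n" for g
    unfolding off_def using st that by simp
  have kv: "kv P1 m g = kv P2 m g" if "g \<in> H" "d g = m" "m \<le> n" for m g
    using that
  proof (induction m arbitrary: g)
    case 0 then show ?case by simp
  next
    case (Suc m)
    have gp: "0 < d g" using Suc by simp
    have PH: "P1 g \<in> H" "d (P1 g) = m" using P_H[OF pt1] P_d[OF pt1] Suc gp by (metis, metis Suc_inject)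
    have "P1 g = P2 g" using ag Suc by simp
    moreover have "kv P1 m (P1 g) = kv P2 m (P1 g)" using Suc.IH PH Suc.prems by simp
    moreover have "off P1 (P1 g) = off P2 (P1 g)" using of PH Suc.prems by simp
    ultimately show ?case by simp
  qed
  assume g: "g \<in> H" "d g \<le> n"
  then show ?thesis unfolding EK_def K_def using kv of by simp
qed

lemma KM_Pst: "KM Pst"
  unfolding KM_def
proof (intro ballI impI)
  fix h g assume h: "h \<in> H" "0 < d h" and g: "g \<in> cand h"
  then obtain n where n: "d h = Suc n" using not0_implies_Suc by blast
  have ag: "Pst x = PP n x" if "x \<in> H" "d x \<le> n" for x using PP_stable that by simp
  have e: "EK Pst x = EK (PP n) x" if "x \<in> H" "d x \<le> n" for x
    using agree[OF ptree_Pst ag] that by blast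
  have "Pst h \<in> cand h" using Pst_props[OF h(1) n] by blast
  then have "Pst h \<in> H" "d (Pst h) = n" using n cand_def by auto
  moreover have "g \<in> H" "d g = n" using g n cand_def by auto
  ultimately show "EK Pst (Pst h) \<le> EK Pst g" using e Pst_props(2)[OF h(1) n] g by simp
qed

end


context bm begin

lemma H1_geo:
  assumes DG: "Delta_in H \<sigma> \<alpha> r S = geodesic_in H \<sigma> \<alpha> r"
  shows "x \<in> S \<Longrightarrow> pos x < pos (\<alpha> x) \<Longrightarrow> d (\<alpha> x) = Suc (d x)"
proof -
  assume x: "x \<in> S" "pos x < pos (\<alpha> x)"
  have xH: "x \<in> H" using x SH by blast
  have "\<alpha> x \<in> Delta_in H \<sigma> \<alpha> r S" unfolding Delta_in_def using x aS ainv xH by simp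
  then have "\<alpha> x \<in> geodesic_in H \<sigma> \<alpha> r" using DG by simp
  then have "d x < d (\<alpha> x)" unfolding geodesic_in_def using ainv xH by simp
  then show ?thesis using adj xH by fastforce
qed

lemma H1_edges:
  assumes pt: "ptree P" and SE: "S = edges P"
  shows "x \<in> S \<Longrightarrow> pos x < pos (\<alpha> x) \<Longrightarrow> d (\<alpha> x) = Suc (d x)"
proof -
  define M where "M = Max (d ` H)"
  have dM: "h \<in> H \<Longrightarrow> d h \<le> M" for h unfolding M_def using finH by simp
  define viol where "viol x \<longleftrightarrow> x \<in> S \<and> pos x < pos (\<alpha> x) \<and> d (\<alpha> x) \<noteq> Suc (d x)" for x
  have nv: "\<not> viol x" if "x \<in> H" for x
    using that
  proof (induction "M - d x" arbitrary: x rule: less_induct)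
    case less
    show ?case
    proof
      assume v: "viol x"
      have xS: "x \<in> S" and lt: "pos x < pos (\<alpha> x)" and nd: "d (\<alpha> x) \<noteq> Suc (d x)"
        using v viol_def by auto
      have xH: "x \<in> H" using less by simp
      obtain c where c: "c \<in> H" "0 < d c" "x = P c \<or> x = \<alpha> (P c)" using xS SE edges_def by auto
      have xc: "x = \<alpha> (P c)"
      proof (rule ccontr)
        assume "x \<noteq> \<alpha> (P c)"
        then have "x = P c" using c by simp
        then have "\<alpha> x \<in> vtx c" "Suc (d x) = d c" using P_a[OF pt c(1,2)] P_d[OF pt c(1,2)] by auto
        then have "d (\<alpha> x) = Suc (d x)" using d_vtx c(1) by simp
        then show False using nd by simp
      qed
      have xv: "x \<in> vtx c" using xc P_a[OF pt c(1,2)] by simp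
      have dx: "d x = d c" using d_vtx c(1) xv by simp
      obtain e where e: "e \<in> vtx x" "\<forall>y\<in>vtx x. pos e \<le> pos y"
        using ex_has_least_nat[of "\<lambda>y. y \<in> vtx x" x pos] vtx_self by blast
      have eH: "e \<in> H" using e vtxH xH by blast
      have de: "d e = d x" using d_vtx xH e by blast
      have "e \<noteq> r" using de dx c d_r by auto
      then obtain z where z: "z \<in> H" "th z = e" "Suc (pos z) = pos e" using pos_pred eH by blast
      have znv: "z \<notin> vtx x" using z e by fastforce
      have zS: "z \<in> S"
      proof (rule ccontr)
        assume "z \<notin> S"
        then have "\<sigma> z = e" using z th_nS by simp
        then show False using znv e vtx_s by metis
      qed
      have se: "\<sigma> (\<alpha> z) = e" using z th_S[OF zS] by simp
      have azv: "\<alpha> z \<in> vtx x" using se e vtx_s by metis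
      have azS: "\<alpha> z \<in> S" using aS zS by blast
      have azH: "\<alpha> z \<in> H" using aH z by blast
      obtain c' where c': "c' \<in> H" "0 < d c'" "\<alpha> z = P c' \<or> \<alpha> z = \<alpha> (P c')"
        using azS SE edges_def by auto
      show False
      proof (cases "\<alpha> z = \<alpha> (P c')")
        case True
        have Pc'H: "P c' \<in> H" using P_H[OF pt c'(1,2)] .
        have zP: "z = P c'" using True ainv z Pc'H by metis
        have "\<alpha> z \<in> vtx c'" using True P_a[OF pt c'(1,2)] by simp
        then have "c' \<in> vtx c" using azv xv vtx_eq vtx_sym by metis
        then have "P c' = P c" using P_const[OF pt c(1)] by blast
        then have "\<alpha> z = x" using zP xc by simp
        then have "z = \<alpha> x" using ainv z by metis
        then have "pos (\<alpha> x) < pos x" using z e(2) vtx_self by fastforce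
        then show False using lt by simp
      next
        case False
        then have azP: "\<alpha> z = P c'" using c' by simp
        have zv: "z \<in> vtx c'" using P_a[OF pt c'(1,2)] azP ainv z by metis
        have dz: "d z = Suc (d (\<alpha> z))" using d_vtx[OF c'(1) zv] P_d[OF pt c'(1,2)] azP by simp
        have daz: "d (\<alpha> z) = d x" using d_vtx xH azv by simp
        have vz: "viol z" unfolding viol_def using zS z e(2) azv dz daz by auto
        have "M - d z < M - d x" using dM[OF z(1)] dz daz by linarith
        then show False using less.hyps z(1) vz by blast
      qed
    qed
  qed
  assume "x \<in> S" "pos x < pos (\<alpha> x)"
  then show ?thesis using nv[of x] SH viol_def by auto
qed

end

context bm1 begin

lemma part_b:
  assumes DG: "Delta_in H \<sigma> \<alpha> r S = geodesic_in H \<sigma> \<alpha> r"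
  shows "S = rightmost_bfs_tree H \<sigma> \<alpha> r"
proof -
  define PS where "PS h = \<alpha> (qv h)" for h
  have A: "PS h \<in> H \<and> \<alpha> (PS h) \<in> vtx h \<and> Suc (d (PS h)) = d h" if h: "h \<in> H" "0 < d h" for h
  proof -
    have q: "qv h \<in> vtx h" "down (qv h)" using qv_props(1,2)[OF h] by auto
    have qH: "qv h \<in> H" using q vtxH h by blast
    have "Suc (d (PS h)) = d (qv h)" using down_d[OF q(2)] PS_def by simp
    also have "\<dots> = d h" using d_vtx h q by simp
    finally show ?thesis using PS_def aH qH ainv q by simp
  qed
  have Bc: "PS g = PS h" if "h \<in> H" "g \<in> vtx h" for h g using qv_vtx that PS_def by simp
  have pt: "ptree PS" unfolding ptree_def using A Bc by blast
  have PSS: "PS h \<in> S" if "h \<in> H" "0 < d h" for h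
    using qv_props(2)[OF that] down_S aS PS_def by simp
  have SE: "S = edges PS"
  proof
    show "S \<subseteq> edges PS"
    proof
      fix x assume xS: "x \<in> S"
      have xH: "x \<in> H" using xS SH by blast
      consider "down x" | "up x" using S_updown xS by blast
      then show "x \<in> edges PS"
      proof cases
        case 1
        have dp: "0 < d x" using down_d[OF 1] by simp
        have "x = qv x" using qv_props(3)[OF xH dp vtx_self 1] .
        then have "x = \<alpha> (PS x)" using PS_def ainv xH by metis
        then show ?thesis unfolding edges_def using xH dp by blast
      next
        case 2
        have d1: "down (\<alpha> x)" using up_down[OF 2] .
        have axH: "\<alpha> x \<in> H" using aH xH by blast
        have dp: "0 < d (\<alpha> x)" using down_d[OF d1] by simp
        have "\<alpha> x = qv (\<alpha> x)" using qv_props(3)[OF axH dp vtx_self d1] .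
        then have "x = PS (\<alpha> x)" using PS_def ainv xH by metis
        then show ?thesis unfolding edges_def using axH dp by blast
      qed
    qed
    show "edges PS \<subseteq> S"
    proof
      fix x assume "x \<in> edges PS"
      then obtain c where c: "c \<in> H" "0 < d c" "x = PS c \<or> x = \<alpha> (PS c)" unfolding edges_def by blast
      have "PS c \<in> S" using PSS c by blast
      then show "x \<in> S" using c aS by blast
    qed
  qed
  have pm: "\<forall>h\<in>H. 0 < d h \<longrightarrow> (\<forall>g\<in>cand h. pos (PS h) \<le> pos g)"
  proof (intro ballI impI)
    fix h g assume h: "h \<in> H" "0 < d h" and g: "g \<in> cand h"
    have gg: "g \<in> H" "\<alpha> g \<in> vtx h" "Suc (d g) = d h" using g cand_def by auto
    have agH: "\<alpha> g \<in> H" using aH gg by blast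
    have dag: "d (\<alpha> g) = d h" using d_vtx h gg by simp
    have "\<alpha> g \<in> geodesic_in H \<sigma> \<alpha> r" unfolding geodesic_in_def using agH ainv gg dag by simp
    then have agD: "\<alpha> g \<in> Delta_in H \<sigma> \<alpha> r S" using DG by simp
    show "pos (PS h) \<le> pos g"
    proof (cases "g \<in> S")
      case True
      then have "\<alpha> g \<in> S" using aS by blast
      then have "pos g < pos (\<alpha> g)" using agD ainv gg unfolding Delta_in_def by auto
      then have "down (\<alpha> g)" using \<open>\<alpha> g \<in> S\<close> ainv gg unfolding down_def by simp
      then have "\<alpha> g = qv h" using qv_props(3)[OF h gg(2)] by simp
      then have "g = PS h" using PS_def ainv gg by metis
      then show ?thesis by simp
    next
      case False
      then have "\<alpha> g \<notin> S" using aS ainv gg by metis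
      then have "pos (\<alpha> g) < pos g" using agD ainv gg unfolding Delta_in_def by auto
      moreover have "pos (PS h) < pos (\<alpha> g)" using qv_range[OF h gg(2)] PS_def by simp
      ultimately show ?thesis by simp
    qed
  qed
  have "KM PS" using KM_iff[OF pt PSS] pm by blast
  then have "rightmost_bfs_tree H \<sigma> \<alpha> r = edges PS" using bfs_edges[OF pt] by blast
  then show ?thesis using SE by simp
qed

lemma part_a:
  assumes pt: "ptree P" and SE: "S = edges P" and km: "KM P"
  shows "Delta_in H \<sigma> \<alpha> r S = geodesic_in H \<sigma> \<alpha> r"
proof -
  have PS: "P h \<in> S" if "h \<in> H" "0 < d h" for h using SE edges_def that by auto
  have pm: "\<forall>h\<in>H. 0 < d h \<longrightarrow> (\<forall>g\<in>cand h. pos (P h) \<le> pos g)" using KM_iff[OF pt PS] km by blast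
  have nonS: "pos h < pos (\<alpha> h)" if h: "h \<in> H" "h \<notin> S" "d (\<alpha> h) < d h" for h
  proof -
    have hp: "0 < d h" using h by simp
    have ahH: "\<alpha> h \<in> H" using aH h by blast
    have dah: "Suc (d (\<alpha> h)) = d h" using adj h by fastforce
    have gc: "\<alpha> h \<in> cand h" unfolding cand_def using ahH ainv h vtx_self dah by simp
    have "\<alpha> h \<noteq> P h"
    proof
      assume "\<alpha> h = P h"
      then have "h = \<alpha> (P h)" using ainv h by metis
      then show False using PS[OF h(1) hp] aS h by metis
    qed
    then have "pos (P h) \<noteq> pos (\<alpha> h)" using pos_inj P_H[OF pt h(1) hp] ahH by metis
    then have plt: "pos (P h) < pos (\<alpha> h)" using pm h(1) hp gc by fastforce
    have aq: "\<alpha> (qv h) = P h" using P_qv[OF pt PS h(1) hp] ainv P_H[OF pt h(1) hp] by metis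
    have "\<not> pos (\<alpha> h) \<le> pos (qv h)"
    proof
      assume "pos (\<alpha> h) \<le> pos (qv h)"
      then have "\<alpha> h \<in> vtx h \<or> d h < d (\<alpha> h)" using qv_props(5)[OF h(1) hp ahH] plt aq by simp
      then show False using d_vtx h dah by fastforce
    qed
    moreover have "pos h \<le> pos (qv h)" using qv_range[OF h(1) hp vtx_self] by simp
    ultimately show ?thesis by simp
  qed
  show ?thesis
  proof (rule set_eqI)
    fix x
    show "x \<in> Delta_in H \<sigma> \<alpha> r S \<longleftrightarrow> x \<in> geodesic_in H \<sigma> \<alpha> r"
    proof (cases "x \<in> H")
      case False then show ?thesis unfolding Delta_in_def geodesic_in_def using SH by auto
    next
      case xH: True
      show ?thesis
      proof (cases "x \<in> S")
        case True
        have "x \<in> Delta_in H \<sigma> \<alpha> r S \<longleftrightarrow> down x" unfolding Delta_in_def down_def using True by simp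
        moreover have "down x \<longleftrightarrow> d (\<alpha> x) < d x"
        proof
          assume "down x" then show "d (\<alpha> x) < d x" using down_d by simp
        next
          assume a: "d (\<alpha> x) < d x"
          show "down x"
          proof (rule ccontr)
            assume "\<not> down x"
            then have "up x" using S_updown True by blast
            then show False using up_d a by simp
          qed
        qed
        ultimately show ?thesis unfolding geodesic_in_def using xH by simp
      next
        case False
        have axS: "\<alpha> x \<notin> S" using False aS ainv xH by metis
        have axH: "\<alpha> x \<in> H" using aH xH by blast
        have D: "x \<in> Delta_in H \<sigma> \<alpha> r S \<longleftrightarrow> pos x < pos (\<alpha> x)" unfolding Delta_in_def using False xH by simp
        show ?thesis
        proof (cases "d (\<alpha> x) < d x")
          case True
          then show ?thesis using D nonS[OF xH False] xH unfolding geodesic_in_def by simp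
        next
          case ng: False
          then have "d (\<alpha> (\<alpha> x)) < d (\<alpha> x)" using adj xH ainv by fastforce
          then have "pos (\<alpha> x) < pos (\<alpha> (\<alpha> x))" using nonS[OF axH axS] by simp
          then have "\<not> pos x < pos (\<alpha> x)" using ainv xH by simp
          then show ?thesis using D ng xH unfolding geodesic_in_def by simp
        qed
      qed
    qed
  qed
qed

end

lemma main_bm:
  assumes "bm H \<sigma> \<alpha> r S"
  shows "Delta_in H \<sigma> \<alpha> r S = geodesic_in H \<sigma> \<alpha> r \<longleftrightarrow> S = rightmost_bfs_tree H \<sigma> \<alpha> r"
proof
  interpret bm H \<sigma> \<alpha> r S by (rule assms)
  assume DG: "Delta_in H \<sigma> \<alpha> r S = geodesic_in H \<sigma> \<alpha> r"
  interpret bm1 H \<sigma> \<alpha> r S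
    by (unfold_locales) (rule H1_geo[OF DG])
  show "S = rightmost_bfs_tree H \<sigma> \<alpha> r" using part_b[OF DG] .
next
  interpret bm H \<sigma> \<alpha> r S by (rule assms)
  assume SE0: "S = rightmost_bfs_tree H \<sigma> \<alpha> r"
  have SE: "S = edges Pst" using SE0 bfs_edges[OF ptree_Pst KM_Pst] by simp
  interpret bm1 H \<sigma> \<alpha> r S
    by (unfold_locales) (rule H1_edges[OF ptree_Pst SE])
  show "Delta_in H \<sigma> \<alpha> r S = geodesic_in H \<sigma> \<alpha> r" using part_a[OF ptree_Pst SE KM_Pst] .
qed

theorem mainTheorem15:
  fixes H :: "'a set" and \<sigma> \<alpha> :: "'a \<Rightarrow> 'a" and r :: 'a and S :: "'a set"
  assumes "covered_map H \<sigma> \<alpha> r S"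
    and "bipartite_map H \<sigma> \<alpha>"
  shows "Delta_in H \<sigma> \<alpha> r S = geodesic_in H \<sigma> \<alpha> r \<longleftrightarrow> S = rightmost_bfs_tree H \<sigma> \<alpha> r"
  by (rule main_bm) (rule bm.intro[OF assms])


end
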